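(* Let $\mathfrak{g}$ be a nice nilpotent Lie algebra of dimension $n$ with nice diagram $\Delta$, $m$ arrows, and structure constants $c\in\mathbb{R}^m$, let $\sigma$ be a diagram involution, and let $k\in\mathbb{R}$ and $\delta\in(\mathbb{Z}_2)^n$ be $\sigma$-invariant. Then $\mathfrak{g}$ has a $\sigma$-diagonal metric $g=\sum_i g_ie^i\otimes e^{\sigma_i}$ with $\operatorname{logsign} g=\delta$ and Ricci operator $\operatorname{Ric}=\frac12k\,\mathrm{id}$ if and only if there exists a $\sigma$-invariant $X\in\mathbb{R}^m$ such that: (K) $M_\Delta^{T}X=[k]$; (H) all entries of $X$ are nonzero; (L$_\sigma$) $\operatorname{logsign} X+\operatorname{logsign} c+\operatorname{logsign}\tilde c=M_{\Delta,2}\,\delta$; (P$_\sigma$) for a basis $\alpha_1,\dots,\alpha_r$ of the $\sigma$-invariant subspace $(\ker M_\Delta^T)^\sigma$, one has $\lvert X\rvert^{\alpha_i}=\lvert c\rvert^{2\alpha_i}$, $i=1,\dots,r$.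
   Context: A nice basis of a real Lie algebra is a basis $\{e_1,\dots,e_n\}$ with dual basis $\{e^i\}$ such that each $[e_i,e_j]$ is a multiple of some $e_h$ and each $e_i\lrcorner\,de^j$ is a multiple of some $e^h$ ($d$ the Chevalley–Eilenberg differential); a nice Lie algebra is a Lie algebra with a fixed nice basis. The nice diagram $\Delta$ has nodes $1,\dots,n$ and an arrow $i\xrightarrow{j}k$ whenever $e_k$ is a nonzero multiple of $[e_i,e_j]$; $\mathcal I_\Delta$ is the set of triples $\{\{i,j\},k\}$ with $i\xrightarrow{j}k$ an arrow, $m=\lvert\mathcal I_\Delta\rvert$. The structure constants $c\in\mathbb{R}^m$ are defined by $de^k=\sum c_{ijk}e^i\wedge e^j$ ($i<j$, over $\mathcal I_\Delta$). The root matrix $M_\Delta$ is the $m\times n$ matrix whose row indexed by $\{\{i,j\},k\}$ has $1$ in column $k$, $-1$ in columns $i,j$, $0$ elsewhere; $M_{\Delta,2}$ is its reduction mod $2$. A diagram involution is a permutation $\sigma$ of $\{1,\dots,n\}$ of order two which is an automorphism of $\Delta$, i.e. $i\xrightarrow{j}k$ is an arrow iff $\sigma_i\xrightarrow{\sigma_j}\sigma_k$ is. It acts on $\mathbb{R}^n$ by permuting coordinates and on $\mathbb{R}^m$ by permuting coordinates via $\{\{i,j\},k\}\mapsto\{\{\sigma_i,\sigma_j\},\sigma_k\}$. The vector $\tilde c\in\mathbb{R}^m$ is the coordinate vector, in the basis $e^l\wedge e^h\otimes e_p$ ($l<h$), of $\sum c_{ijk}\,e^{\sigma_i}\wedge e^{\sigma_j}\otimes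 e_{\sigma_k}$. A $\sigma$-diagonal metric is a nondegenerate scalar product $\sum_i g_ie^i\otimes e^{\sigma_i}$ with $g=(g_1,\dots,g_n)\in(\mathbb{R}\setminus\{0\})^n$ $\sigma$-invariant. $\operatorname{logsign}x=0$ for $x>0$ and $1$ for $x<0$, applied componentwise; $[k]\in\mathbb{R}^n$ has all entries $k$; $\lvert X\rvert^\alpha=\prod_j\lvert x_j\rvert^{\alpha_j}$; $\operatorname{Ric}$ is the Ricci operator of the left-invariant pseudoriemannian metric. *)

theory Defs
  imports Complex_Main
begin

text \<open>A real Lie algebra of dimension n with basis e_0,...,e_(n-1) is given by its
  bracket coefficients: [e_i,e_j] = sum_h C i j h e_h (indices below n).\<close>

definition lie_algebra :: "nat \<Rightarrow> (nat \<Rightarrow> nat \<Rightarrow> nat \<Rightarrow> real) \<Rightarrow> bool" where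
  "lie_algebra n C \<longleftrightarrow>
     (\<forall>i j h. \<not> (i < n \<and> j < n \<and> h < n) \<longrightarrow> C i j h = 0) \<and>
     (\<forall>i j h. C i j h = - C j i h) \<and>
     (\<forall>a<n. \<forall>b<n. \<forall>c<n. \<forall>h<n.
        (\<Sum>p<n. C a b p * C p c h + C b c p * C p a h + C c a p * C p b h) = 0)"

text \<open>Chevalley--Eilenberg differential: de^k(e_i,e_j) = - e^k([e_i,e_j]).\<close>
definition dcoef :: "(nat \<Rightarrow> nat \<Rightarrow> nat \<Rightarrow> real) \<Rightarrow> nat \<Rightarrow> nat \<Rightarrow> nat \<Rightarrow> real" where
  "dcoef C i j k = - C i j k"

text \<open>Nice basis: each [e_i,e_j] is a multiple of a single e_h, and each
  e_i \<lrcorner> de^j = sum_h de^j(e_i,e_h) e^h is a multiple of a single e^h.\<close>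
definition nice_lie_algebra :: "nat \<Rightarrow> (nat \<Rightarrow> nat \<Rightarrow> nat \<Rightarrow> real) \<Rightarrow> bool" where
  "nice_lie_algebra n C \<longleftrightarrow> lie_algebra n C \<and>
     (\<forall>i<n. \<forall>j<n. \<forall>h<n. \<forall>h'<n. C i j h \<noteq> 0 \<longrightarrow> C i j h' \<noteq> 0 \<longrightarrow> h = h') \<and>
     (\<forall>i<n. \<forall>j<n. \<forall>h<n. \<forall>h'<n. dcoef C i h j \<noteq> 0 \<longrightarrow> dcoef C i h' j \<noteq> 0 \<longrightarrow> h = h')"

definition lie_bracket :: "nat \<Rightarrow> (nat \<Rightarrow> nat \<Rightarrow> nat \<Rightarrow> real) \<Rightarrow> (nat \<Rightarrow> real) \<Rightarrow> (nat \<Rightarrow> real) \<Rightarrow> (nat \<Rightarrow> real)" where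
  "lie_bracket n C x y = (\<lambda>h. \<Sum>i<n. \<Sum>j<n. x i * y j * C i j h)"

definition nilpotent_lie :: "nat \<Rightarrow> (nat \<Rightarrow> nat \<Rightarrow> nat \<Rightarrow> real) \<Rightarrow> bool" where
  "nilpotent_lie n C \<longleftrightarrow> (\<exists>N. \<forall>xs y. length xs = N \<longrightarrow>
      (\<forall>h<n. foldr (lie_bracket n C) xs y h = 0))"

text \<open>Index set I_Delta: triples (i,j,k), i<j, with an arrow i -j-> k.\<close>
definition arrows :: "nat \<Rightarrow> (nat \<Rightarrow> nat \<Rightarrow> nat \<Rightarrow> real) \<Rightarrow> (nat \<times> nat \<times> nat) set" where
  "arrows n C = {(i, j, k). i < j \<and> j < n \<and> k < n \<and> C i j k \<noteq> 0}"

text \<open>Structure constants: de^k = sum_{i<j} c_ijk e^i\<and>e^j.\<close>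
definition struct_const :: "(nat \<Rightarrow> nat \<Rightarrow> nat \<Rightarrow> real) \<Rightarrow> nat \<times> nat \<times> nat \<Rightarrow> real" where
  "struct_const C t = (case t of (i, j, k) \<Rightarrow> dcoef C i j k)"

definition root_matrix :: "nat \<times> nat \<times> nat \<Rightarrow> nat \<Rightarrow> int" where
  "root_matrix t l = (case t of (i, j, k) \<Rightarrow>
      (if l = k then 1 else 0) - (if l = i then 1 else 0) - (if l = j then 1 else 0))"

text \<open>M_{Delta,2} delta, computed in Z_2 (values 0,1).\<close>
definition root_matrix2_mult :: "nat \<Rightarrow> (nat \<Rightarrow> int) \<Rightarrow> nat \<times> nat \<times> nat \<Rightarrow> int" where
  "root_matrix2_mult n \<delta> t = (\<Sum>l<n. root_matrix t l * \<delta> l) mod 2"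

definition diagram_involution :: "nat \<Rightarrow> (nat \<Rightarrow> nat \<Rightarrow> nat \<Rightarrow> real) \<Rightarrow> (nat \<Rightarrow> nat) \<Rightarrow> bool" where
  "diagram_involution n C \<sigma> \<longleftrightarrow>
     (\<forall>i<n. \<sigma> i < n) \<and> (\<forall>i<n. \<sigma> (\<sigma> i) = i) \<and> (\<exists>i<n. \<sigma> i \<noteq> i) \<and>
     (\<forall>i<n. \<forall>j<n. \<forall>k<n. C i j k \<noteq> 0 \<longleftrightarrow> C (\<sigma> i) (\<sigma> j) (\<sigma> k) \<noteq> 0)"

text \<open>Action of sigma on index triples {{i,j},k}.\<close>
definition sigma_act :: "(nat \<Rightarrow> nat) \<Rightarrow> nat \<times> nat \<times> nat \<Rightarrow> nat \<times> nat \<times> nat" where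
  "sigma_act \<sigma> t = (case t of (i, j, k) \<Rightarrow> (min (\<sigma> i) (\<sigma> j), max (\<sigma> i) (\<sigma> j), \<sigma> k))"

text \<open>c tilde: coefficient of e^l\<and>e^h\<otimes>e_p (l<h) in sum c_ijk e^{sigma i}\<and>e^{sigma j}\<otimes>e_{sigma k}.\<close>
definition c_tilde :: "(nat \<Rightarrow> nat) \<Rightarrow> (nat \<Rightarrow> nat \<Rightarrow> nat \<Rightarrow> real) \<Rightarrow> nat \<times> nat \<times> nat \<Rightarrow> real" where
  "c_tilde \<sigma> C t = (case t of (l, h, p) \<Rightarrow>
      (if \<sigma> l < \<sigma> h then struct_const C (\<sigma> l, \<sigma> h, \<sigma> p)
       else - struct_const C (\<sigma> h, \<sigma> l, \<sigma> p)))"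

definition logsign :: "real \<Rightarrow> int" where
  "logsign x = (if x < 0 then 1 else 0)"

definition abs_pow :: "(nat \<times> nat \<times> nat) set \<Rightarrow> (nat \<times> nat \<times> nat \<Rightarrow> real) \<Rightarrow> (nat \<times> nat \<times> nat \<Rightarrow> real) \<Rightarrow> real" where
  "abs_pow I X a = (\<Prod>t\<in>I. \<bar>X t\<bar> powr a t)"

text \<open>(ker M_Delta^T)^sigma, as a subspace of R^I (functions vanishing outside I).\<close>
definition inv_kernel :: "nat \<Rightarrow> (nat \<Rightarrow> nat \<Rightarrow> nat \<Rightarrow> real) \<Rightarrow> (nat \<Rightarrow> nat) \<Rightarrow> (nat \<times> nat \<times> nat \<Rightarrow> real) set" where
  "inv_kernel n C \<sigma> = {a. (\<forall>t. t \<notin> arrows n C \<longrightarrow> a t = 0) \<and>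
      (\<forall>l<n. (\<Sum>t\<in>arrows n C. of_int (root_matrix t l) * a t) = 0) \<and>
      (\<forall>t\<in>arrows n C. a (sigma_act \<sigma> t) = a t)}"

definition is_basis_of :: "nat \<Rightarrow> (nat \<Rightarrow> 'a \<Rightarrow> real) \<Rightarrow> ('a \<Rightarrow> real) set \<Rightarrow> bool" where
  "is_basis_of r \<alpha> V \<longleftrightarrow>
     (\<forall>i<r. \<alpha> i \<in> V) \<and>
     (\<forall>w. (\<lambda>t. \<Sum>i<r. w i * \<alpha> i t) = (\<lambda>t. 0) \<longrightarrow> (\<forall>i<r. w i = 0)) \<and>
     (\<forall>a\<in>V. \<exists>w. a = (\<lambda>t. \<Sum>i<r. w i * \<alpha> i t))"

text \<open>sigma-diagonal metric sum_i g_i e^i \<otimes> e^{sigma i}, as Gram matrix.\<close>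
definition sigma_diagonal :: "nat \<Rightarrow> (nat \<Rightarrow> nat) \<Rightarrow> (nat \<Rightarrow> real) \<Rightarrow> bool" where
  "sigma_diagonal n \<sigma> g \<longleftrightarrow> (\<forall>i<n. g i \<noteq> 0 \<and> g (\<sigma> i) = g i)"

definition sdiag_metric :: "(nat \<Rightarrow> nat) \<Rightarrow> (nat \<Rightarrow> real) \<Rightarrow> nat \<Rightarrow> nat \<Rightarrow> real" where
  "sdiag_metric \<sigma> g i j = (if j = \<sigma> i then g i else 0)"

text \<open>Left-invariant Levi-Civita connection (Koszul formula):
  2<nabla_x y, z> = <[x,y],z> - <[y,z],x> + <[z,x],y>;  nabla_{e_i} e_j = sum_k LC i j k e_k.\<close>
definition koszul :: "nat \<Rightarrow> (nat \<Rightarrow> nat \<Rightarrow> nat \<Rightarrow> real) \<Rightarrow> (nat \<Rightarrow> nat \<Rightarrow> real) \<Rightarrow> nat \<Rightarrow> nat \<Rightarrow> nat \<Rightarrow> real" where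
  "koszul n C G i j l = (1/2) * ((\<Sum>h<n. C i j h * G h l) - (\<Sum>h<n. C j l h * G h i)
                                 + (\<Sum>h<n. C l i h * G h j))"

definition levi_civita :: "nat \<Rightarrow> (nat \<Rightarrow> nat \<Rightarrow> nat \<Rightarrow> real) \<Rightarrow> (nat \<Rightarrow> nat \<Rightarrow> real) \<Rightarrow> nat \<Rightarrow> nat \<Rightarrow> nat \<Rightarrow> real" where
  "levi_civita n C G = (THE \<Gamma>. (\<forall>i j k. \<not> (i < n \<and> j < n \<and> k < n) \<longrightarrow> \<Gamma> i j k = 0) \<and>
      (\<forall>i<n. \<forall>j<n. \<forall>l<n. (\<Sum>k<n. \<Gamma> i j k * G k l) = koszul n C G i j l))"

text \<open>R(e_a,e_b)e_c = nabla_a nabla_b e_c - nabla_b nabla_a e_c - nabla_{[e_a,e_b]} e_c = sum_q riem a b c q e_q.\<close>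
definition riem :: "nat \<Rightarrow> (nat \<Rightarrow> nat \<Rightarrow> nat \<Rightarrow> real) \<Rightarrow> (nat \<Rightarrow> nat \<Rightarrow> real) \<Rightarrow> nat \<Rightarrow> nat \<Rightarrow> nat \<Rightarrow> nat \<Rightarrow> real" where
  "riem n C G a b c q = (let \<Gamma> = levi_civita n C G in
     (\<Sum>p<n. \<Gamma> b c p * \<Gamma> a p q - \<Gamma> a c p * \<Gamma> b p q - C a b p * \<Gamma> p c q))"

text \<open>ric(y,z) = tr(x \<mapsto> R(x,y)z).\<close>
definition ricci_tensor :: "nat \<Rightarrow> (nat \<Rightarrow> nat \<Rightarrow> nat \<Rightarrow> real) \<Rightarrow> (nat \<Rightarrow> nat \<Rightarrow> real) \<Rightarrow> nat \<Rightarrow> nat \<Rightarrow> real" where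
  "ricci_tensor n C G b c = (\<Sum>a<n. riem n C G a b c a)"

text \<open>Ricci operator: g(Ric e_b, e_c) = ric(e_b,e_c), Ric e_b = sum_q Q b q e_q.\<close>
definition ricci_operator :: "nat \<Rightarrow> (nat \<Rightarrow> nat \<Rightarrow> nat \<Rightarrow> real) \<Rightarrow> (nat \<Rightarrow> nat \<Rightarrow> real) \<Rightarrow> nat \<Rightarrow> nat \<Rightarrow> real" where
  "ricci_operator n C G = (THE Q. (\<forall>i j. \<not> (i < n \<and> j < n) \<longrightarrow> Q i j = 0) \<and>
      (\<forall>b<n. \<forall>c<n. (\<Sum>q<n. Q b q * G q c) = ricci_tensor n C G b c))"

end

theory Submission
  imports Defs
begin

locale base =
  fixes n :: nat and C :: "nat \<Rightarrow> nat \<Rightarrow> nat \<Rightarrow> real" and s :: "nat \<Rightarrow> nat"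
  assumes nice: "nice_lie_algebra n C"
    and nilp: "nilpotent_lie n C"
    and dinv: "diagram_involution n C s"
begin

lemma lie: "lie_algebra n C"
  using nice unfolding nice_lie_algebra_def by simp

lemma C_out: "\<not> (i < n \<and> j < n \<and> h < n) \<Longrightarrow> C i j h = 0"
proof -
  have "\<forall>i j h. \<not> (i < n \<and> j < n \<and> h < n) \<longrightarrow> C i j h = 0"
    using lie unfolding lie_algebra_def by (rule conjunct1)
  then show "\<not> (i < n \<and> j < n \<and> h < n) \<Longrightarrow> C i j h = 0" by blast
qed

lemma C_nz: "C i j h \<noteq> 0 \<Longrightarrow> i < n \<and> j < n \<and> h < n"
  using C_out by blast

lemma C_anti: "C i j h = - C j i h"
proof -
  have "\<forall>i j h. C i j h = - C j i h"
    using lie unfolding lie_algebra_def by (elim conjE)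
  then show ?thesis by blast
qed

lemma C_diag: "C i i h = 0"
  using C_anti[of i i h] by simp

lemma s_lt: "i < n \<Longrightarrow> s i < n"
proof -
  have "\<forall>i<n. s i < n" using dinv unfolding diagram_involution_def by (elim conjE)
  then show "i < n \<Longrightarrow> s i < n" by blast
qed

lemma s_s: "i < n \<Longrightarrow> s (s i) = i"
proof -
  have "\<forall>i<n. s (s i) = i" using dinv unfolding diagram_involution_def by (elim conjE)
  then show "i < n \<Longrightarrow> s (s i) = i" by blast
qed

lemma s_inj: "i < n \<Longrightarrow> j < n \<Longrightarrow> s i = s j \<Longrightarrow> i = j"
  using s_s by metis

lemma C_s: "i < n \<Longrightarrow> j < n \<Longrightarrow> k < n \<Longrightarrow> C (s i) (s j) (s k) \<noteq> 0 \<longleftrightarrow> C i j k \<noteq> 0"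
proof -
  assume r: "i < n" "j < n" "k < n"
  have H: "\<forall>i<n. \<forall>j<n. \<forall>k<n. C i j k \<noteq> 0 \<longleftrightarrow> C (s i) (s j) (s k) \<noteq> 0"
    using dinv unfolding diagram_involution_def by (elim conjE)
  show ?thesis using H[rule_format, OF r] by (rule sym)
qed

lemma C_s': "C i j k \<noteq> 0 \<Longrightarrow> C (s i) (s j) (s k) \<noteq> 0"
  using C_s C_nz by blast

lemma C_s'': "i < n \<Longrightarrow> j < n \<Longrightarrow> k < n \<Longrightarrow> C (s i) (s j) (s k) \<noteq> 0 \<Longrightarrow> C i j k \<noteq> 0"
  using C_s by blast

lemma nice1: "C i j h \<noteq> 0 \<Longrightarrow> C i j h' \<noteq> 0 \<Longrightarrow> h = h'"
proof -
  assume a: "C i j h \<noteq> 0" "C i j h' \<noteq> 0"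
  have H: "\<forall>i<n. \<forall>j<n. \<forall>h<n. \<forall>h'<n. C i j h \<noteq> 0 \<longrightarrow> C i j h' \<noteq> 0 \<longrightarrow> h = h'"
    using nice unfolding nice_lie_algebra_def by (elim conjE)
  show ?thesis
    apply (rule H[rule_format, of i j h h'])
    using a C_nz[OF a(1)] C_nz[OF a(2)] by auto
qed

lemma nice2: "C i h j \<noteq> 0 \<Longrightarrow> C i h' j \<noteq> 0 \<Longrightarrow> h = h'"
proof -
  assume a: "C i h j \<noteq> 0" "C i h' j \<noteq> 0"
  then have "dcoef C i h j \<noteq> 0" "dcoef C i h' j \<noteq> 0" by (auto simp: dcoef_def)
  moreover have "i < n" "j < n" "h < n" "h' < n" using a C_nz by auto
  moreover have H: "\<forall>i<n. \<forall>j<n. \<forall>h<n. \<forall>h'<n. dcoef C i h j \<noteq> 0 \<longrightarrow> dcoef C i h' j \<noteq> 0 \<longrightarrow> h = h'"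
    using nice unfolding nice_lie_algebra_def by (elim conjE)
  ultimately show ?thesis
    apply -
    apply (rule H[rule_format, of i j h h'])
    by assumption+
qed

definition E :: "real \<Rightarrow> nat \<Rightarrow> nat \<Rightarrow> real" where
  "E c u = (\<lambda>h. if h = u then c else 0)"

lemma br_E:
  assumes "C x u v \<noteq> 0"
  shows "lie_bracket n C (E 1 x) (E c u) = E (c * C x u v) v"
proof
  fix h
  have xu: "x < n" "u < n" "v < n" using C_nz assms by auto
  have "lie_bracket n C (E 1 x) (E c u) h = (\<Sum>i<n. \<Sum>j<n. (if i = x then 1 else 0) * (if j = u then c else 0) * C i j h)"
    by (simp add: lie_bracket_def E_def)
  also have "\<dots> = (\<Sum>i<n. if i = x then (\<Sum>j<n. (if j = u then c else 0) * C i j h) else 0)"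
    by (intro sum.cong) auto
  also have "\<dots> = (\<Sum>j<n. (if j = u then c else 0) * C x j h)" using xu by simp
  also have "\<dots> = (\<Sum>j<n. if j = u then c * C x j h else 0)"
    by (intro sum.cong) auto
  also have "\<dots> = c * C x u h" using xu by simp
  also have "\<dots> = E (c * C x u v) v h"
    using nice1[OF assms, of h] by (auto simp: E_def)
  finally show "lie_bracket n C (E 1 x) (E c u) h = E (c * C x u v) v h" .
qed

lemma cyc_iter:
  assumes "C x u v \<noteq> 0" "C y v u \<noteq> 0"
  shows "foldr (lie_bracket n C) (concat (replicate m [E 1 y, E 1 x])) (E 1 u)
         = E ((C x u v * C y v u) ^ m) u"
proof (induction m)
  case 0
  then show ?case by simp
next
  case (Suc m)
  have "foldr (lie_bracket n C) (concat (replicate (Suc m) [E 1 y, E 1 x])) (E 1 u)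
      = lie_bracket n C (E 1 y) (lie_bracket n C (E 1 x) (E ((C x u v * C y v u) ^ m) u))"
    using Suc by simp
  also have "\<dots> = E ((C x u v * C y v u) ^ Suc m) u"
    using br_E[OF assms(1)] br_E[OF assms(2)] by (simp add: mult_ac)
  finally show ?case .
qed

lemma cyc: "C x u v \<noteq> 0 \<Longrightarrow> C y v u \<noteq> 0 \<Longrightarrow> False"
proof -
  assume a: "C x u v \<noteq> 0" "C y v u \<noteq> 0"
  obtain N where N: "\<And>xs z. length xs = N \<Longrightarrow> (\<forall>h<n. foldr (lie_bracket n C) xs z h = 0)"
    using nilp unfolding nilpotent_lie_def by blast
  define L where "L = concat (replicate N [E 1 y, E 1 x])"
  have len: "length L = N + N" unfolding L_def by (simp add: length_concat sum_list_replicate)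
  have "foldr (lie_bracket n C) L (E 1 u) = foldr (lie_bracket n C) (take N L) (foldr (lie_bracket n C) (drop N L) (E 1 u))"
    by (metis append_take_drop_id foldr_append comp_apply)
  then have "foldr (lie_bracket n C) L (E 1 u) u = 0"
    using N[of "take N L"] len C_nz a by simp
  moreover have "foldr (lie_bracket n C) L (E 1 u) u = (C x u v * C y v u) ^ N"
    unfolding L_def cyc_iter[OF a] by (simp add: E_def)
  ultimately have "(C x u v * C y v u) ^ N = 0" by simp
  then show False using a by simp
qed

lemma cyc0: "C x u v * C y v u = 0"
proof (rule ccontr)
  assume "C x u v * C y v u \<noteq> 0"
  then have "C x u v \<noteq> 0" "C y v u \<noteq> 0" by auto
  then show False by (rule cyc)
qed

end

context base begin

lemma cyc_self: "C x u u = 0"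
  using cyc[of x u u x] by blast

lemma sum_s: "(\<Sum>a<n. f (s a)) = (\<Sum>a<n. (f a :: real))"
  by (rule sum.reindex_bij_witness[where i=s and j=s]) (auto simp: s_s s_lt)

lemma SS_s: "(\<Sum>a<n. \<Sum>p<n. f (s a) (s p)) = (\<Sum>a<n. \<Sum>p<n. (f a p :: real))"
proof -
  have "(\<Sum>a<n. \<Sum>p<n. f (s a) (s p)) = (\<Sum>a<n. \<Sum>p<n. f (s a) p)"
    by (rule sum.cong) (auto intro: sum_s)
  also have "\<dots> = (\<Sum>a<n. \<Sum>p<n. f a p)" by (rule sum_s)
  finally show ?thesis .
qed

lemma SS_inner: "(\<Sum>a<n. \<Sum>p<n. f a (s p)) = (\<Sum>a<n. \<Sum>p<n. (f a p :: real))"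
  by (rule sum.cong) (auto intro: sum_s)

lemma SS_swap: "(\<Sum>a<n. \<Sum>p<n. f p a) = (\<Sum>a<n. \<Sum>p<n. (f a p :: real))"
  by (rule sum.swap)

lemma SS_sswap: "(\<Sum>a<n. \<Sum>p<n. f (s p) (s a)) = (\<Sum>a<n. \<Sum>p<n. (f a p :: real))"
  using SS_s[of "\<lambda>a p. f p a"] SS_swap[of f] by simp

end

locale metric = base +
  fixes g :: "nat \<Rightarrow> real"
  assumes gd: "sigma_diagonal n s g"
begin

lemma g_nz: "i < n \<Longrightarrow> g i \<noteq> 0"
  using gd unfolding sigma_diagonal_def by blast

lemma g_s: "i < n \<Longrightarrow> g (s i) = g i"
  using gd unfolding sigma_diagonal_def by blast

abbreviation "G \<equiv> sdiag_metric s g"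

lemma sumG: "l < n \<Longrightarrow> (\<Sum>k<n. f k * G k l) = f (s l) * g (s l)"
proof -
  assume l: "l < n"
  have "(\<Sum>k<n. f k * G k l) = (\<Sum>k<n. if k = s l then f k * g k else 0)"
  proof (rule sum.cong)
    fix k assume "k \<in> {..<n}"
    then have "k < n" by simp
    then have "(l = s k) = (k = s l)" using l s_s by metis
    then show "f k * G k l = (if k = s l then f k * g k else 0)"
      by (simp add: sdiag_metric_def)
  qed simp
  also have "\<dots> = f (s l) * g (s l)" using s_lt[OF l] by simp
  finally show ?thesis .
qed

definition Gam :: "nat \<Rightarrow> nat \<Rightarrow> nat \<Rightarrow> real" where
  "Gam i j k = (if i < n \<and> j < n \<and> k < n then
      (C i j k + C (s k) j (s i) * g i / g k + C (s k) i (s j) * g j / g k) / 2 else 0)"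

lemma koszul_val: "i < n \<Longrightarrow> j < n \<Longrightarrow> l < n \<Longrightarrow> koszul n C G i j l = Gam i j (s l) * g (s l)"
proof -
  assume r: "i < n" "j < n" "l < n"
  have k: "koszul n C G i j l = (1/2) * (C i j (s l) * g (s l) - C j l (s i) * g (s i) + C l i (s j) * g (s j))"
    unfolding koszul_def using sumG[of l "\<lambda>h. C i j h"] sumG[of i "\<lambda>h. C j l h"] sumG[of j "\<lambda>h. C l i h"] r
    by simp
  have "Gam i j (s l) * g (s l) = (C i j (s l) + C l j (s i) * g i / g (s l) + C l i (s j) * g j / g (s l)) / 2 * g (s l)"
    using r s_lt s_s by (simp add: Gam_def)
  also have "\<dots> = (C i j (s l) * g (s l) + C l j (s i) * g i + C l i (s j) * g j) / 2"
    using g_nz[OF s_lt[OF r(3)]] by (simp add: field_simps)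
  finally show ?thesis unfolding k using r g_s C_anti[of l j "s i"] by simp
qed

lemma Gam_G: "i < n \<Longrightarrow> j < n \<Longrightarrow> l < n \<Longrightarrow> (\<Sum>k<n. Gam i j k * G k l) = koszul n C G i j l"
  using sumG koszul_val by simp

lemma levi: "levi_civita n C G = Gam"
  unfolding levi_civita_def
proof (rule the_equality)
  show "(\<forall>i j k. \<not> (i < n \<and> j < n \<and> k < n) \<longrightarrow> Gam i j k = 0) \<and>
    (\<forall>i<n. \<forall>j<n. \<forall>l<n. (\<Sum>k<n. Gam i j k * G k l) = koszul n C G i j l)"
    using Gam_G by (auto simp: Gam_def)
next
  fix \<Gamma>
  assume H: "(\<forall>i j k. \<not> (i < n \<and> j < n \<and> k < n) \<longrightarrow> \<Gamma> i j k = 0) \<and>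
    (\<forall>i<n. \<forall>j<n. \<forall>l<n. (\<Sum>k<n. \<Gamma> i j k * G k l) = koszul n C G i j l)"
  show "\<Gamma> = Gam"
  proof (intro ext)
    fix i j k
    show "\<Gamma> i j k = Gam i j k"
    proof (cases "i < n \<and> j < n \<and> k < n")
      case True
      then have r: "i < n" "j < n" "k < n" by auto
      have "(\<Sum>k'<n. \<Gamma> i j k' * G k' (s k)) = koszul n C G i j (s k)"
        using H r s_lt by blast
      then have "\<Gamma> i j k * g k = Gam i j k * g k"
        using sumG[OF s_lt[OF r(3)], of "\<Gamma> i j"] koszul_val[OF r(1,2) s_lt[OF r(3)]] s_s[OF r(3)]
        by simp
      then show ?thesis using g_nz[OF r(3)] by simp
    next
      case False
      then show ?thesis using H by (auto simp: Gam_def)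
    qed
  qed
qed

lemma ric_expand: "ricci_tensor n C G b c =
   (\<Sum>a<n. \<Sum>p<n. Gam b c p * Gam a p a - Gam a c p * Gam b p a - C a b p * Gam p c a)"
  unfolding ricci_tensor_def riem_def Let_def levi by simp

lemma trace_Gam: "p < n \<Longrightarrow> (\<Sum>a<n. Gam a p a) = 0"
proof -
  assume p: "p < n"
  define S where "S = (\<Sum>a<n. C (s a) a (s p) * g p / g a)"
  have "(\<Sum>a<n. Gam a p a) = (\<Sum>a<n. (C (s a) a (s p) * g p / g a) / 2)"
  proof (rule sum.cong)
    fix a assume "a \<in> {..<n}"
    then have a: "a < n" by simp
    have "C a p a = 0" using C_anti[of a p a] cyc_self[of p a] by simp
    moreover have "C (s a) p (s a) = 0" using C_anti[of "s a" p "s a"] cyc_self[of p "s a"] by simp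
    ultimately show "Gam a p a = (C (s a) a (s p) * g p / g a) / 2"
      using a p by (simp add: Gam_def)
  qed simp
  also have "\<dots> = S / 2" unfolding S_def by (simp add: sum_divide_distrib)
  also have "S = - S"
  proof -
    have "S = (\<Sum>a<n. C (s (s a)) (s a) (s p) * g p / g (s a))"
      unfolding S_def by (rule sum_s[symmetric])
    also have "\<dots> = (\<Sum>a<n. - (C (s a) a (s p) * g p / g a))"
      by (rule sum.cong) (auto simp: s_s g_s C_anti[of a "s a" "s p" for a])
    also have "\<dots> = - S" unfolding S_def by (simp add: sum_negf)
    finally show ?thesis .
  qed
  then have "S = 0" by simp
  finally show ?thesis by simp
qed

end

context metric begin

definition Y :: "nat \<Rightarrow> nat \<Rightarrow> nat \<Rightarrow> real" where
  "Y i j k = C i j k * C (s i) (s j) (s k) * g k / (g i * g j)"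

lemma Y_sym: "Y i j k = Y j i k"
  unfolding Y_def using C_anti[of i j k] C_anti[of "s i" "s j" "s k"] by (simp add: mult_ac)

lemma Y_s: "i < n \<Longrightarrow> j < n \<Longrightarrow> k < n \<Longrightarrow> Y (s i) (s j) (s k) = Y i j k"
  unfolding Y_def by (simp add: s_s g_s mult_ac)

definition Sin :: "nat \<Rightarrow> real" where "Sin b = (\<Sum>i<n. \<Sum>j<n. Y i j b)"
definition Sout :: "nat \<Rightarrow> real" where "Sout b = (\<Sum>j<n. \<Sum>k<n. Y b j k)"
definition Dv :: "nat \<Rightarrow> real" where "Dv b = Sin b / 4 - Sout b / 2"

lemma Cs2: "a < n \<Longrightarrow> b < n \<Longrightarrow> p < n \<Longrightarrow> C (s a) (s b) (s p) \<noteq> 0 \<Longrightarrow> C a b p \<noteq> 0"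
  using C_s'' by blast

lemma Cs1: "C (s a) b (s p) \<noteq> 0 \<Longrightarrow> a < n \<Longrightarrow> p < n \<Longrightarrow> C a (s b) p \<noteq> 0"
proof -
  assume h: "C (s a) b (s p) \<noteq> 0" "a < n" "p < n"
  have "C (s (s a)) (s b) (s (s p)) \<noteq> 0" by (rule C_s'[OF h(1)])
  then show ?thesis using h s_s by simp
qed

context
  fixes b c :: nat
  assumes bc: "b < n" "c < n"
begin

lemma z1: "C a c p * C b p a = 0"
  using cyc0[of c a p b] C_anti[of a c p] by simp

lemma z2: "C (s p) c (s a) * C (s a) b (s p) = 0"
  using cyc0[of b "s a" "s p" c] C_anti[of "s p" c "s a"] C_anti[of "s a" b "s p"] by auto

lemma z3: "C a b p * C p c a = 0"
  using cyc0[of b a p c] C_anti[of a b p] C_anti[of p c a] by simp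

lemma d1: assumes ap: "a < n" "p < n"
  shows "C a c p * (C (s a) b (s p) * g p / g a) = (if c = s b then g b * Y a (s b) p else 0)"
proof (cases "c = s b")
  case True
  then show ?thesis using ap bc g_nz[OF bc(1)] g_nz[OF ap(1)]
    by (simp add: Y_def s_s g_s field_simps)
next
  case False
  have "C a c p = 0 \<or> C (s a) b (s p) = 0"
  proof (rule ccontr)
    assume "\<not> ?thesis"
    then have h: "C a c p \<noteq> 0" "C (s a) b (s p) \<noteq> 0" by auto
    have "C a (s b) p \<noteq> 0" using Cs1[OF h(2) ap] .
    then have "c = s b" using nice2[OF h(1)] by blast
    then show False using False by simp
  qed
  then show ?thesis using False by auto
qed

lemma d2: assumes ap: "a < n" "p < n"
  shows "C (s p) c (s a) * g a / g p * C b p a = (if c = s b then - (g b * Y p b a) else 0)"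
proof (cases "c = s b")
  case True
  then show ?thesis using ap bc g_nz[OF bc(1)] g_nz[OF ap(2)] C_anti[of p b a]
    by (simp add: Y_def s_s g_s field_simps)
next
  case False
  have "C (s p) c (s a) = 0 \<or> C b p a = 0"
  proof (rule ccontr)
    assume "\<not> ?thesis"
    then have h: "C (s p) c (s a) \<noteq> 0" "C b p a \<noteq> 0" by auto
    have "C (s (s p)) (s c) (s (s a)) \<noteq> 0" by (rule C_s'[OF h(1)])
    then have h1: "C p (s c) a \<noteq> 0" using ap s_s by simp
    have h2: "C p b a \<noteq> 0" using h(2) C_anti[of p b a] by simp
    have "s c = b" using nice2[OF h1 h2] .
    then have "c = s b" using s_s bc by metis
    then show False using False by simp
  qed
  then show ?thesis using False by auto
qed

lemma d3: assumes ap: "a < n" "p < n"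
  shows "C (s p) a (s c) * g c / g p * (C (s a) p (s b) * g b / g a) = (if c = s b then - (g b * Y (s p) a b) else 0)"
proof (cases "c = s b")
  case True
  then show ?thesis using ap bc g_nz[OF bc(1)] g_nz[OF ap(2)] g_nz[OF ap(1)] C_anti[of "s a" p "s b"]
    by (simp add: Y_def s_s g_s s_lt field_simps)
next
  case False
  have "C (s p) a (s c) = 0 \<or> C (s a) p (s b) = 0"
  proof (rule ccontr)
    assume "\<not> ?thesis"
    then have h: "C (s p) a (s c) \<noteq> 0" "C (s a) p (s b) \<noteq> 0" by auto
    have "C (s (s a)) (s p) (s (s b)) \<noteq> 0" by (rule C_s'[OF h(2)])
    then have "C a (s p) b \<noteq> 0" using ap bc s_s by simp
    then have h2: "C (s p) a b \<noteq> 0" using C_anti[of a "s p" b] by simp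
    have "s c = b" using nice1[OF h(1) h2] .
    then have "c = s b" using s_s bc by metis
    then show False using False by simp
  qed
  then show ?thesis using False by auto
qed

lemma d4: assumes ap: "a < n" "p < n"
  shows "C a b p * (C (s a) c (s p) * g p / g a) = (if c = s b then g b * Y a b p else 0)"
proof (cases "c = s b")
  case True
  then show ?thesis using ap bc g_nz[OF bc(1)] g_nz[OF ap(1)]
    by (simp add: Y_def s_s g_s field_simps)
next
  case False
  have "C a b p = 0 \<or> C (s a) c (s p) = 0"
  proof (rule ccontr)
    assume "\<not> ?thesis"
    then have h: "C a b p \<noteq> 0" "C (s a) c (s p) \<noteq> 0" by auto
    have h1: "C (s a) (s b) (s p) \<noteq> 0" by (rule C_s'[OF h(1)])
    have "c = s b" using nice2[OF h(2) h1] .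
    then show False using False by simp
  qed
  then show ?thesis using False by auto
qed

end

end

context base begin

definition SS :: "(nat \<Rightarrow> nat \<Rightarrow> real) \<Rightarrow> real" where
  "SS f = (\<Sum>a<n. \<Sum>p<n. f a p)"

lemma SS_add: "SS (\<lambda>a p. f a p + h a p) = SS f + SS h"
  unfolding SS_def by (simp add: sum.distrib)

lemma SS_mult: "SS (\<lambda>a p. r * f a p) = r * SS f"
  unfolding SS_def by (simp add: sum_distrib_left)

lemma SS_cong: "(\<And>a p. a < n \<Longrightarrow> p < n \<Longrightarrow> f a p = h a p) \<Longrightarrow> SS f = SS h"
  unfolding SS_def by (intro sum.cong) auto

lemma SS_sswap': "SS (\<lambda>a p. f (s p) (s a)) = SS f"
  unfolding SS_def by (rule SS_sswap)

lemma SS_swap': "SS (\<lambda>a p. f p a) = SS f"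
  unfolding SS_def by (rule SS_swap)

lemma SS_s': "SS (\<lambda>a p. f (s a) (s p)) = SS f"
  unfolding SS_def by (rule SS_s)

lemma SS_inner': "SS (\<lambda>a p. f a (s p)) = SS f"
  unfolding SS_def by (rule SS_inner)

lemma SS_lin4: "SS (\<lambda>a p. r1 * f1 a p + r2 * f2 a p + r3 * f3 a p + r4 * f4 a p)
   = r1 * SS f1 + r2 * SS f2 + r3 * SS f3 + r4 * SS f4"
  unfolding SS_def by (simp add: sum.distrib sum_distrib_left)

lemma SS_zero: "SS (\<lambda>a p. 0) = 0"
  unfolding SS_def by simp

end

lemma expand9:
  fixes x0 x1 x2 y0 y1 y2 z w0 w1 w2 :: real
  shows "- ((x0 + x1 + x2) / 2) * ((y0 + y1 + y2) / 2) - z * ((w0 + w1 + w2) / 2) =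
    (-(1/4) * (x0 * y0 + x0 * y2 + x1 * y0 + x1 * y2 + x2 * y1) - (1/2) * (z * w0 + z * w1))
    + (-(1/4) * (x0 * y1 + x1 * y1))
    + (-(1/4) * (x2 * y0) - (1/4) * (x2 * y2) - (1/2) * (z * w2))"
  by (simp add: field_simps)

context metric begin

lemma ric_val:
  assumes bc: "b < n" "c < n"
  shows "ricci_tensor n C G b c = (if c = s b then g b * Dv b else 0)"
proof -
  define P0 where "P0 = (\<lambda>a p. C a c p)"
  define P1 where "P1 = (\<lambda>a p. C (s p) c (s a) * g a / g p)"
  define P2 where "P2 = (\<lambda>a p. C (s p) a (s c) * g c / g p)"
  define Q0 where "Q0 = (\<lambda>a p. C b p a)"
  define Q1 where "Q1 = (\<lambda>a p. C (s a) p (s b) * g b / g a)"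
  define Q2 where "Q2 = (\<lambda>a p. C (s a) b (s p) * g p / g a)"
  define R0 where "R0 = (\<lambda>a p. C p c a)"
  define R1 where "R1 = (\<lambda>a p. C (s a) c (s p) * g p / g a)"
  define R2 where "R2 = (\<lambda>a p. C (s a) p (s c) * g c / g a)"
  define Tg where "Tg = (\<lambda>a p. -(1/4) * (P0 a p * Q0 a p + P0 a p * Q2 a p + P1 a p * Q0 a p + P1 a p * Q2 a p + P2 a p * Q1 a p)
      - (1/2) * (C a b p * R0 a p + C a b p * R1 a p))"
  define G1 where "G1 = (\<lambda>a p. -(1/4) * (P0 a p * Q1 a p + P1 a p * Q1 a p))"
  define G2 where "G2 = (\<lambda>a p. -(1/4) * (P2 a p * Q0 a p) - (1/4) * (P2 a p * Q2 a p) - (1/2) * (C a b p * R2 a p))"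
  have "ricci_tensor n C G b c = SS (\<lambda>a p. Gam b c p * Gam a p a + (- Gam a c p * Gam b p a - C a b p * Gam p c a))"
    unfolding ric_expand SS_def by (simp add: algebra_simps)
  also have "\<dots> = SS (\<lambda>a p. Gam b c p * Gam a p a) + SS (\<lambda>a p. - Gam a c p * Gam b p a - C a b p * Gam p c a)"
    by (rule SS_add)
  also have "SS (\<lambda>a p. Gam b c p * Gam a p a) = 0"
  proof -
    have "SS (\<lambda>a p. Gam b c p * Gam a p a) = (\<Sum>p<n. \<Sum>a<n. Gam b c p * Gam a p a)"
      unfolding SS_def by (rule sum.swap)
    also have "\<dots> = (\<Sum>p<n. Gam b c p * (\<Sum>a<n. Gam a p a))"
      by (simp add: sum_distrib_left)
    also have "\<dots> = 0" using trace_Gam by simp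
    finally show ?thesis .
  qed
  also have "SS (\<lambda>a p. - Gam a c p * Gam b p a - C a b p * Gam p c a) = SS (\<lambda>a p. Tg a p + G1 a p + G2 a p)"
  proof (rule SS_cong)
    fix a p assume ap: "a < n" "p < n"
    have "Gam a c p = (P0 a p + P1 a p + P2 a p) / 2"
      using ap bc unfolding Gam_def P0_def P1_def P2_def by simp
    moreover have "Gam b p a = (Q0 a p + Q1 a p + Q2 a p) / 2"
      using ap bc unfolding Gam_def Q0_def Q1_def Q2_def by simp
    moreover have "Gam p c a = (R0 a p + R1 a p + R2 a p) / 2"
      using ap bc unfolding Gam_def R0_def R1_def R2_def by simp
    ultimately show "- Gam a c p * Gam b p a - C a b p * Gam p c a = Tg a p + G1 a p + G2 a p"
      unfolding Tg_def G1_def G2_def by (simp only: expand9)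
  qed
  also have "\<dots> = SS Tg + SS G1 + SS G2"
    using SS_add[of "\<lambda>a p. Tg a p + G1 a p" G2] SS_add[of Tg G1] by simp
  also have "SS G1 = 0"
  proof -
    have "SS (\<lambda>a p. P1 a p * Q1 a p) = SS (\<lambda>a p. P1 (s p) (s a) * Q1 (s p) (s a))"
      by (rule SS_sswap'[symmetric])
    also have "\<dots> = SS (\<lambda>a p. - (P0 a p * Q1 a p))"
    proof (rule SS_cong)
      fix a p assume ap: "a < n" "p < n"
      show "P1 (s p) (s a) * Q1 (s p) (s a) = - (P0 a p * Q1 a p)"
        unfolding P1_def Q1_def P0_def using ap C_anti[of p "s a" "s b"] g_nz[OF ap(1)] g_nz[OF ap(2)]
        by (simp add: s_s g_s s_lt)
    qed
    also have "\<dots> = - SS (\<lambda>a p. P0 a p * Q1 a p)"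
      using SS_mult[of "-1" "\<lambda>a p. P0 a p * Q1 a p"] by simp
    finally have "SS (\<lambda>a p. P1 a p * Q1 a p) = - SS (\<lambda>a p. P0 a p * Q1 a p)" .
    then show ?thesis unfolding G1_def
      using SS_mult[of "-(1/4)" "\<lambda>a p. P0 a p * Q1 a p + P1 a p * Q1 a p"]
        SS_add[of "\<lambda>a p. P0 a p * Q1 a p" "\<lambda>a p. P1 a p * Q1 a p"] by simp
  qed
  also have "SS G2 = 0"
  proof -
    define W where "W = (\<lambda>a p. P2 a p * Q0 a p)"
    have x: "SS (\<lambda>a p. P2 a p * Q2 a p) = SS W"
    proof -
      have "SS (\<lambda>a p. P2 a p * Q2 a p) = SS (\<lambda>a p. P2 (s p) (s a) * Q2 (s p) (s a))"
        by (rule SS_sswap'[symmetric])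
      also have "\<dots> = SS W"
      proof (rule SS_cong)
        fix a p assume ap: "a < n" "p < n"
        show "P2 (s p) (s a) * Q2 (s p) (s a) = W a p"
          unfolding P2_def Q2_def W_def Q0_def using ap C_anti[of a "s p" "s c"] C_anti[of p b a] g_nz
          by (simp add: s_s g_s s_lt)
      qed
      finally show ?thesis .
    qed
    have z: "SS (\<lambda>a p. C a b p * R2 a p) = - SS W"
    proof -
      have "SS (\<lambda>a p. C a b p * R2 a p) = SS (\<lambda>a p. C p b a * R2 p a)"
        by (rule SS_swap'[symmetric])
      also have "\<dots> = SS (\<lambda>a p. - W a p)"
      proof (rule SS_cong)
        fix a p assume ap: "a < n" "p < n"
        show "C p b a * R2 p a = - W a p"
          unfolding R2_def W_def P2_def Q0_def using C_anti[of p b a] by simp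
      qed
      also have "\<dots> = - SS W" using SS_mult[of "-1" W] by simp
      finally show ?thesis .
    qed
    have "SS G2 = -(1/4) * SS W - (1/4) * SS (\<lambda>a p. P2 a p * Q2 a p) - (1/2) * SS (\<lambda>a p. C a b p * R2 a p)"
      unfolding G2_def W_def SS_def
      by (simp add: sum.distrib sum_subtractf sum_distrib_left)
    then show ?thesis using x z by simp
  qed
  also have "SS Tg = SS (\<lambda>a p. if c = s b then g b * (-(1/4) * (Y a (s b) p - Y p b a - Y (s p) a b) - (1/2) * Y a b p) else 0)"
  proof (rule SS_cong)
    fix a p assume ap: "a < n" "p < n"
    have e1: "P0 a p * Q0 a p = 0" unfolding P0_def Q0_def using z1 bc by simp
    have e2: "P1 a p * Q2 a p = 0" unfolding P1_def Q2_def
      using z2[OF bc, of p a] by (simp add: mult_ac)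
    have e3: "C a b p * R0 a p = 0" unfolding R0_def using z3[OF bc] by simp
    have e4: "P0 a p * Q2 a p = (if c = s b then g b * Y a (s b) p else 0)"
      unfolding P0_def Q2_def by (rule d1[OF bc ap])
    have e5: "P1 a p * Q0 a p = (if c = s b then - (g b * Y p b a) else 0)"
      unfolding P1_def Q0_def by (rule d2[OF bc ap])
    have e6: "P2 a p * Q1 a p = (if c = s b then - (g b * Y (s p) a b) else 0)"
      unfolding P2_def Q1_def by (rule d3[OF bc ap])
    have e7: "C a b p * R1 a p = (if c = s b then g b * Y a b p else 0)"
      unfolding R1_def by (rule d4[OF bc ap])
    show "Tg a p = (if c = s b then g b * (-(1/4) * (Y a (s b) p - Y p b a - Y (s p) a b) - (1/2) * Y a b p) else 0)"
      unfolding Tg_def e1 e2 e3 e4 e5 e6 e7 by (simp add: algebra_simps)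
  qed
  also have "\<dots> = (if c = s b then g b * Dv b else 0)"
  proof (cases "c = s b")
    case False
    then show ?thesis using SS_zero by simp
  next
    case True
    have y1: "SS (\<lambda>a p. Y a (s b) p) = Sout b"
    proof -
      have "SS (\<lambda>a p. Y a (s b) p) = SS (\<lambda>a p. Y (s b) (s a) (s p))"
        using SS_s'[of "\<lambda>a p. Y (s b) a p"] Y_sym by simp
      also have "\<dots> = SS (\<lambda>a p. Y b a p)"
        by (rule SS_cong) (simp add: Y_s bc)
      finally show ?thesis unfolding Sout_def SS_def .
    qed
    have y2: "SS (\<lambda>a p. Y p b a) = Sout b"
      using SS_swap'[of "\<lambda>a p. Y b a p"] Y_sym unfolding Sout_def SS_def by simp
    have y3: "SS (\<lambda>a p. Y (s p) a b) = Sin b"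
    proof -
      have "SS (\<lambda>a p. Y (s p) a b) = SS (\<lambda>a p. Y p a b)"
        by (rule SS_inner'[of "\<lambda>a p. Y p a b"])
      also have "\<dots> = Sin b" using SS_swap'[of "\<lambda>a p. Y a p b"] unfolding Sin_def SS_def by simp
      finally show ?thesis .
    qed
    have y4: "SS (\<lambda>a p. Y a b p) = Sout b"
      using Y_sym unfolding Sout_def SS_def by simp
    have "SS (\<lambda>a p. g b * (-(1/4) * (Y a (s b) p - Y p b a - Y (s p) a b) - (1/2) * Y a b p))
      = SS (\<lambda>a p. (-(1/4) * g b) * Y a (s b) p + ((1/4) * g b) * Y p b a + ((1/4) * g b) * Y (s p) a b + (-(1/2) * g b) * Y a b p)"
      by (rule SS_cong) (simp add: algebra_simps)
    also have "\<dots> = g b * (-(1/4) * (SS (\<lambda>a p. Y a (s b) p) - SS (\<lambda>a p. Y p b a) - SS (\<lambda>a p. Y (s p) a b)) - (1/2) * SS (\<lambda>a p. Y a b p))"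
      unfolding SS_lin4 by (simp add: algebra_simps)
    also have "\<dots> = g b * Dv b" unfolding y1 y2 y3 y4 Dv_def by (simp add: algebra_simps)
    finally show ?thesis using True by simp
  qed
  finally show ?thesis by simp
qed

end

lemma cube_sum: "(\<Sum>t\<in>{..<n}\<times>{..<n}\<times>{..<(n::nat)}. f t) = (\<Sum>i<n. \<Sum>j<n. \<Sum>k<n. (f (i,j,k) :: real))"
  by (simp add: sum.cartesian_product)

lemma sum_subset_cube:
  assumes "S \<subseteq> {..<n}\<times>{..<n}\<times>{..<(n::nat)}"
  shows "(\<Sum>t\<in>S. f t) = (\<Sum>i<n. \<Sum>j<n. \<Sum>k<n. if (i,j,k) \<in> S then (f (i,j,k) :: real) else 0)"
proof -
  have e: "{..<n}\<times>{..<n}\<times>{..<n} \<inter> S = S" using assms by blast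
  have "(\<Sum>t\<in>S. f t) = (\<Sum>t\<in>{..<n}\<times>{..<n}\<times>{..<n} \<inter> S. f t)" by (simp only: e)
  also have "\<dots> = (\<Sum>t\<in>{..<n}\<times>{..<n}\<times>{..<n}. if t \<in> S then f t else 0)"
    by (rule sum.inter_restrict) simp
  finally have "(\<Sum>t\<in>S. f t) = (\<Sum>t\<in>{..<n}\<times>{..<n}\<times>{..<n}. if t \<in> S then f t else 0)" .
  then show ?thesis by (simp add: cube_sum)
qed

lemma half_sum:
  fixes H :: "nat \<Rightarrow> nat \<Rightarrow> real"
  assumes sym: "\<And>i j. H i j = H j i" and dg: "\<And>i. H i i = 0"
  shows "(\<Sum>i<n. \<Sum>j<n. H i j) = 2 * (\<Sum>i<n. \<Sum>j<n. if i < j then H i j else 0)"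
proof -
  have "(\<Sum>i<n. \<Sum>j<n. H i j) = (\<Sum>i<n. \<Sum>j<n. (if i < j then H i j else 0) + (if j < i then H i j else 0))"
    by (intro sum.cong refl) (auto simp: dg)
  also have "\<dots> = (\<Sum>i<n. \<Sum>j<n. if i < j then H i j else 0) + (\<Sum>i<n. \<Sum>j<n. if j < i then H i j else 0)"
    by (simp add: sum.distrib)
  also have "(\<Sum>i<n. \<Sum>j<n. if j < i then H i j else 0) = (\<Sum>j<n. \<Sum>i<n. if j < i then H i j else 0)"
    by (rule sum.swap)
  also have "\<dots> = (\<Sum>i<n. \<Sum>j<n. if i < j then H i j else 0)"
    by (intro sum.cong refl) (metis sym)
  finally show ?thesis by simp
qed

context base begin

lemma arrows_sub: "arrows n C \<subseteq> {..<n}\<times>{..<n}\<times>{..<n}"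
  unfolding arrows_def by auto

lemma finite_arrows: "finite (arrows n C)"
  using arrows_sub finite_subset by blast

lemma arrows_sum:
  fixes F :: "nat \<times> nat \<times> nat \<Rightarrow> real"
  assumes sym: "\<And>i j k. F (i,j,k) = F (j,i,k)"
    and z: "\<And>i j k. C i j k = 0 \<Longrightarrow> F (i,j,k) = 0"
  shows "(\<Sum>t\<in>arrows n C. F t) = (1/2) * (\<Sum>i<n. \<Sum>j<n. \<Sum>k<n. F (i,j,k))"
proof -
  have "(\<Sum>t\<in>arrows n C. F t) = (\<Sum>i<n. \<Sum>j<n. \<Sum>k<n. if (i,j,k) \<in> arrows n C then F (i,j,k) else 0)"
    by (rule sum_subset_cube[OF arrows_sub])
  also have "\<dots> = (\<Sum>i<n. \<Sum>j<n. if i < j then (\<Sum>k<n. F (i,j,k)) else 0)"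
  proof (intro sum.cong refl)
    fix i j assume "i \<in> {..<n}" "j \<in> {..<n}"
    then have r: "i < n" "j < n" by auto
    show "(\<Sum>k<n. if (i,j,k) \<in> arrows n C then F (i,j,k) else 0) = (if i < j then (\<Sum>k<n. F (i,j,k)) else 0)"
    proof (cases "i < j")
      case True
      have "(if (i,j,k) \<in> arrows n C then F (i,j,k) else 0) = F (i,j,k)" if "k < n" for k
        using True r that z[of i j k] by (auto simp: arrows_def)
      then show ?thesis using True by simp
    next
      case False
      then show ?thesis by (simp add: arrows_def)
    qed
  qed
  also have "\<dots> = (1/2) * (\<Sum>i<n. \<Sum>j<n. \<Sum>k<n. F (i,j,k))"
    using half_sum[of "\<lambda>i j. \<Sum>k<n. F (i,j,k)" n] sym z C_diag by simp
  finally show ?thesis .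
qed

end

context metric begin

definition Yt :: "nat \<times> nat \<times> nat \<Rightarrow> real" where
  "Yt t = (case t of (i,j,k) \<Rightarrow> Y i j k)"

lemma Y_zero: "C i j k = 0 \<Longrightarrow> Y i j k = 0"
  unfolding Y_def by simp

lemma rm_val: "of_int (root_matrix (i,j,k) l) = (if l = k then 1 else 0) - (if l = i then 1 else 0) - (if l = j then (1::real) else 0)"
  unfolding root_matrix_def by simp

lemma arrows_Dv:
  assumes l: "l < n"
  shows "(\<Sum>t\<in>arrows n C. of_int (root_matrix t l) * Yt t) = 2 * Dv l"
proof -
  have "(\<Sum>t\<in>arrows n C. of_int (root_matrix t l) * Yt t)
     = (1/2) * (\<Sum>i<n. \<Sum>j<n. \<Sum>k<n. of_int (root_matrix (i,j,k) l) * Yt (i,j,k))"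
    by (rule arrows_sum) (auto simp: rm_val Yt_def Y_zero intro: Y_sym)
  also have "(\<Sum>i<n. \<Sum>j<n. \<Sum>k<n. of_int (root_matrix (i,j,k) l) * Yt (i,j,k))
      = (\<Sum>i<n. \<Sum>j<n. \<Sum>k<n. (if l = k then Y i j k else 0))
      - (\<Sum>i<n. \<Sum>j<n. \<Sum>k<n. (if l = i then Y i j k else 0))
      - (\<Sum>i<n. \<Sum>j<n. \<Sum>k<n. (if l = j then Y i j k else 0))"
  proof -
    have pt: "of_int (root_matrix (i,j,k) l) * Yt (i,j,k) = (if l = k then Y i j k else 0) - (if l = i then Y i j k else 0) - (if l = j then Y i j k else 0)" for i j k
      by (simp add: rm_val Yt_def algebra_simps)
    show ?thesis unfolding pt by (simp add: sum_subtractf)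
  qed
  also have "(\<Sum>i<n. \<Sum>j<n. \<Sum>k<n. (if l = k then Y i j k else 0)) = Sin l"
    unfolding Sin_def using l by simp
  also have "(\<Sum>i<n. \<Sum>j<n. \<Sum>k<n. (if l = i then Y i j k else 0)) = Sout l"
  proof -
    have "(\<Sum>i<n. \<Sum>j<n. \<Sum>k<n. (if l = i then Y i j k else 0)) = (\<Sum>i<n. if l = i then (\<Sum>j<n. \<Sum>k<n. Y i j k) else 0)"
      by (intro sum.cong refl) auto
    then show ?thesis unfolding Sout_def using l by simp
  qed
  also have "(\<Sum>i<n. \<Sum>j<n. \<Sum>k<n. (if l = j then Y i j k else 0)) = Sout l"
  proof -
    have "(\<Sum>i<n. \<Sum>j<n. \<Sum>k<n. (if l = j then Y i j k else 0)) = (\<Sum>i<n. \<Sum>j<n. if l = j then (\<Sum>k<n. Y i j k) else 0)"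
      by (intro sum.cong refl) auto
    also have "\<dots> = (\<Sum>i<n. \<Sum>k<n. Y l i k)"
      using l by (simp add: Y_sym[of _ l])
    finally show ?thesis unfolding Sout_def .
  qed
  finally show ?thesis unfolding Dv_def by simp
qed

lemma ricop: "ricci_operator n C G = (\<lambda>i j. if i < n \<and> j < n \<and> i = j then Dv i else 0)"
  unfolding ricci_operator_def
proof (rule the_equality)
  show "(\<forall>i j. \<not> (i < n \<and> j < n) \<longrightarrow> (if i < n \<and> j < n \<and> i = j then Dv i else 0) = 0) \<and>
    (\<forall>b<n. \<forall>c<n. (\<Sum>q<n. (if b < n \<and> q < n \<and> b = q then Dv b else 0) * G q c) = ricci_tensor n C G b c)"
  proof (intro conjI allI impI)
    fix b c assume r: "b < n" "c < n"
    have "(\<Sum>q<n. (if b < n \<and> q < n \<and> b = q then Dv b else 0) * G q c)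
        = (if b < n \<and> s c < n \<and> b = s c then Dv b else 0) * g (s c)"
      by (rule sumG[OF r(2)])
    also have "\<dots> = ricci_tensor n C G b c"
      unfolding ric_val[OF r] using r s_lt s_s g_s by (auto simp: mult.commute)
    finally show "(\<Sum>q<n. (if b < n \<and> q < n \<and> b = q then Dv b else 0) * G q c) = ricci_tensor n C G b c" .
  qed auto
next
  fix Q
  assume H: "(\<forall>i j. \<not> (i < n \<and> j < n) \<longrightarrow> Q i j = 0) \<and>
    (\<forall>b<n. \<forall>c<n. (\<Sum>q<n. Q b q * G q c) = ricci_tensor n C G b c)"
  show "Q = (\<lambda>i j. if i < n \<and> j < n \<and> i = j then Dv i else 0)"
  proof (intro ext)
    fix b q
    show "Q b q = (if b < n \<and> q < n \<and> b = q then Dv b else 0)"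
    proof (cases "b < n \<and> q < n")
      case True
      then have r: "b < n" "q < n" by auto
      have "(\<Sum>q'<n. Q b q' * G q' (s q)) = ricci_tensor n C G b (s q)"
        using H r s_lt by blast
      then have "Q b q * g q = (if s q = s b then g b * Dv b else 0)"
        using sumG[OF s_lt[OF r(2)], of "Q b"] ric_val[OF r(1) s_lt[OF r(2)]] s_s[OF r(2)] by simp
      then have "Q b q * g q = (if b = q then Dv b * g q else 0)"
        using r s_inj s_lt by (auto simp: mult.commute)
      then show ?thesis using g_nz[OF r(2)] r by (cases "b = q") auto
    next
      case False
      then show ?thesis using H by auto
    qed
  qed
qed

end

lemma fredholm:
  fixes M :: "'a \<Rightarrow> nat \<Rightarrow> real" and I :: "'a set"
  assumes fI: "finite I" and fJ: "finite J"
  shows "(\<exists>y. \<forall>t\<in>I. v t = (\<Sum>l\<in>J. M t l * y l)) \<or>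
         (\<exists>a. (\<forall>l\<in>J. (\<Sum>t\<in>I. M t l * a t) = 0) \<and> (\<Sum>t\<in>I. a t * v t) \<noteq> 0)"
  using fJ
proof (induction J arbitrary: v rule: finite_induct)
  case empty
  show ?case
  proof (cases "\<forall>t\<in>I. v t = 0")
    case True
    then show ?thesis by simp
  next
    case False
    then obtain t0 where t0: "t0 \<in> I" "v t0 \<noteq> 0" by auto
    have "(\<Sum>t\<in>I. v t * v t) \<noteq> 0"
    proof
      assume "(\<Sum>t\<in>I. v t * v t) = 0"
      then have "\<forall>t\<in>I. v t * v t = 0"
        using sum_nonneg_eq_0_iff[OF fI, of "\<lambda>t. v t * v t"] by simp
      then show False using t0 by simp
    qed
    then show ?thesis by blast
  qed
next
  case (insert l J)
  note IH = insert.IH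
  show ?case
  proof (cases "\<exists>z. \<forall>t\<in>I. M t l = (\<Sum>l'\<in>J. M t l' * z l')")
    case True
    then obtain z where z: "\<And>t. t \<in> I \<Longrightarrow> M t l = (\<Sum>l'\<in>J. M t l' * z l')" by blast
    from IH[of v] show ?thesis
    proof
      assume "\<exists>y. \<forall>t\<in>I. v t = (\<Sum>l\<in>J. M t l * y l)"
      then obtain y where y: "\<And>t. t \<in> I \<Longrightarrow> v t = (\<Sum>l\<in>J. M t l * y l)" by blast
      have "\<forall>t\<in>I. v t = (\<Sum>l''\<in>insert l J. M t l'' * (y(l := 0)) l'')"
      proof
        fix t assume t: "t \<in> I"
        have "(\<Sum>l''\<in>J. M t l'' * (y(l := 0)) l'') = (\<Sum>l''\<in>J. M t l'' * y l'')"
          using insert.hyps(2) by (intro sum.cong) auto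
        then show "v t = (\<Sum>l''\<in>insert l J. M t l'' * (y(l := 0)) l'')"
          using insert.hyps y[OF t] by simp
      qed
      then show ?thesis by blast
    next
      assume "\<exists>a. (\<forall>l\<in>J. (\<Sum>t\<in>I. M t l * a t) = 0) \<and> (\<Sum>t\<in>I. a t * v t) \<noteq> 0"
      then obtain a where a: "\<And>l'. l' \<in> J \<Longrightarrow> (\<Sum>t\<in>I. M t l' * a t) = 0" "(\<Sum>t\<in>I. a t * v t) \<noteq> 0" by blast
      have "(\<Sum>t\<in>I. M t l * a t) = (\<Sum>t\<in>I. (\<Sum>l'\<in>J. M t l' * z l') * a t)"
        using z by (intro sum.cong) auto
      also have "\<dots> = (\<Sum>l'\<in>J. z l' * (\<Sum>t\<in>I. M t l' * a t))"
        by (simp add: sum_distrib_left sum_distrib_right mult_ac sum.swap[of _ I J])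
      also have "\<dots> = 0" using a(1) by simp
      finally have "(\<Sum>t\<in>I. M t l * a t) = 0" .
      then show ?thesis using a by blast
    qed
  next
    case False
    from IH[of "\<lambda>t. M t l"] False obtain b where
      b: "\<And>l'. l' \<in> J \<Longrightarrow> (\<Sum>t\<in>I. M t l' * b t) = 0" "(\<Sum>t\<in>I. b t * M t l) \<noteq> 0" by blast
    define \<beta> where "\<beta> = (\<Sum>t\<in>I. b t * M t l)"
    define c where "c = (\<Sum>t\<in>I. b t * v t) / \<beta>"
    have \<beta>: "\<beta> \<noteq> 0" using b(2) unfolding \<beta>_def .
    from IH[of "\<lambda>t. v t - c * M t l"] show ?thesis
    proof
      assume "\<exists>y. \<forall>t\<in>I. v t - c * M t l = (\<Sum>l\<in>J. M t l * y l)"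
      then obtain y where y: "\<And>t. t \<in> I \<Longrightarrow> v t - c * M t l = (\<Sum>l\<in>J. M t l * y l)" by blast
      have "\<forall>t\<in>I. v t = (\<Sum>l''\<in>insert l J. M t l'' * (y(l := c)) l'')"
      proof
        fix t assume t: "t \<in> I"
        have "(\<Sum>l''\<in>J. M t l'' * (y(l := c)) l'') = (\<Sum>l''\<in>J. M t l'' * y l'')"
          using insert.hyps(2) by (intro sum.cong) auto
        then show "v t = (\<Sum>l''\<in>insert l J. M t l'' * (y(l := c)) l'')"
          using insert.hyps y[OF t] by (simp add: algebra_simps)
      qed
      then show ?thesis by blast
    next
      assume "\<exists>a. (\<forall>l\<in>J. (\<Sum>t\<in>I. M t l * a t) = 0) \<and> (\<Sum>t\<in>I. a t * (v t - c * M t l)) \<noteq> 0"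
      then obtain a where a: "\<And>l'. l' \<in> J \<Longrightarrow> (\<Sum>t\<in>I. M t l' * a t) = 0"
        "(\<Sum>t\<in>I. a t * (v t - c * M t l)) \<noteq> 0" by blast
      define \<kappa> where "\<kappa> = (\<Sum>t\<in>I. a t * M t l) / \<beta>"
      define a2 where "a2 = (\<lambda>t. a t - \<kappa> * b t)"
      have lin: "(\<Sum>t\<in>I. M t l' * a2 t) = (\<Sum>t\<in>I. M t l' * a t) - \<kappa> * (\<Sum>t\<in>I. M t l' * b t)" for l'
        unfolding a2_def by (simp add: algebra_simps sum_subtractf sum_distrib_left)
      have o1: "\<forall>l'\<in>insert l J. (\<Sum>t\<in>I. M t l' * a2 t) = 0"
      proof
        fix l' assume "l' \<in> insert l J"
        then show "(\<Sum>t\<in>I. M t l' * a2 t) = 0"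
        proof
          assume "l' = l"
          have "(\<Sum>t\<in>I. M t l * a t) - \<kappa> * (\<Sum>t\<in>I. M t l * b t) = 0"
            unfolding \<kappa>_def using \<beta> unfolding \<beta>_def by (simp add: mult_ac)
          then show ?thesis using lin \<open>l' = l\<close> by simp
        next
          assume "l' \<in> J"
          then show ?thesis using lin a(1) b(1) by simp
        qed
      qed
      have "(\<Sum>t\<in>I. a2 t * v t) = (\<Sum>t\<in>I. a t * v t) - \<kappa> * (\<Sum>t\<in>I. b t * v t)"
        unfolding a2_def by (simp add: algebra_simps sum_subtractf sum_distrib_left)
      also have "\<dots> = (\<Sum>t\<in>I. a t * v t) - c * (\<Sum>t\<in>I. a t * M t l)"
        unfolding \<kappa>_def c_def by simp
      also have "\<dots> = (\<Sum>t\<in>I. a t * (v t - c * M t l))"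
        by (simp add: algebra_simps sum_subtractf sum_distrib_left)
      finally have "(\<Sum>t\<in>I. a2 t * v t) \<noteq> 0" using a(2) by simp
      then show ?thesis using o1 by blast
    qed
  qed
qed


lemma ls_range: "logsign x = 0 \<or> logsign x = 1"
  unfolding logsign_def by simp

lemma ls_mult: "x \<noteq> 0 \<Longrightarrow> y \<noteq> 0 \<Longrightarrow> logsign (x * y) = (logsign x + logsign y) mod 2"
  unfolding logsign_def by (auto simp: mult_less_0_iff)

lemma ls_div: "x \<noteq> 0 \<Longrightarrow> y \<noteq> 0 \<Longrightarrow> logsign (x / y) = (logsign x + logsign y) mod 2"
  unfolding logsign_def by (auto simp: divide_less_0_iff)

lemma ls_neg: "x \<noteq> 0 \<Longrightarrow> logsign (- x) = 1 - logsign x"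
  unfolding logsign_def by auto

lemma ls_eq: "x \<noteq> 0 \<Longrightarrow> y \<noteq> 0 \<Longrightarrow> \<bar>x\<bar> = \<bar>y\<bar> \<Longrightarrow> logsign x = logsign y \<Longrightarrow> x = y"
  unfolding logsign_def by (auto split: if_splits simp: abs_if)

lemma abs_pow_exp:
  assumes "finite A" "\<forall>t\<in>A. X t \<noteq> 0"
  shows "abs_pow A X a = exp (\<Sum>t\<in>A. a t * ln \<bar>X t\<bar>)"
  unfolding abs_pow_def using assms by (simp add: exp_sum powr_def mult.commute)

context base begin

abbreviation "A \<equiv> arrows n C"

lemma arr_mem: "(i,j,k) \<in> A \<longleftrightarrow> i < j \<and> j < n \<and> k < n \<and> C i j k \<noteq> 0"
  unfolding arrows_def by simp

lemma sa_val: "sigma_act s (i,j,k) = (min (s i) (s j), max (s i) (s j), s k)"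
  unfolding sigma_act_def by simp

lemma sa_arr: "t \<in> A \<Longrightarrow> sigma_act s t \<in> A"
proof -
  assume "t \<in> A"
  then obtain i j k where t: "t = (i,j,k)" and h: "i < j" "j < n" "k < n" "C i j k \<noteq> 0"
    by (cases t) (auto simp: arr_mem)
  have i: "i < n" using h by simp
  have ne: "s i \<noteq> s j" using s_inj[OF i h(2)] h(1) by auto
  have c: "C (s i) (s j) (s k) \<noteq> 0" using C_s'[OF h(4)] .
  show ?thesis
  proof (cases "s i < s j")
    case True
    then show ?thesis using t c s_lt h i by (simp add: sa_val arr_mem)
  next
    case False
    then have "s j < s i" using ne by simp
    then show ?thesis using t c s_lt h i C_anti[of "s j" "s i" "s k"] by (simp add: sa_val arr_mem)
  qed
qed

lemma sa_sa: "t \<in> A \<Longrightarrow> sigma_act s (sigma_act s t) = t"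
proof -
  assume "t \<in> A"
  then obtain i j k where t: "t = (i,j,k)" and h: "i < j" "j < n" "k < n" "C i j k \<noteq> 0"
    by (cases t) (auto simp: arr_mem)
  have i: "i < n" using h by simp
  show ?thesis
    using t h i s_s[OF i] s_s[OF h(2)] s_s[OF h(3)] by (cases "s i < s j") (auto simp: sa_val min_def max_def)
qed

lemma sum_sa: "(\<Sum>t\<in>A. f (sigma_act s t)) = (\<Sum>t\<in>A. (f t :: real))"
  by (rule sum.reindex_bij_witness[where i="sigma_act s" and j="sigma_act s"]) (auto simp: sa_sa sa_arr)

lemma rm_sa: "t \<in> A \<Longrightarrow> l < n \<Longrightarrow> root_matrix (sigma_act s t) l = root_matrix t (s l)"
proof -
  assume "t \<in> A" and l: "l < n"
  then obtain i j k where t: "t = (i,j,k)" and h: "i < j" "j < n" "k < n" "C i j k \<noteq> 0"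
    by (cases t) (auto simp: arr_mem)
  have i: "i < n" using h by simp
  have e: "\<And>x. x < n \<Longrightarrow> (l = s x) = (s l = x)" using s_s l by metis
  show ?thesis
    using t e[OF i] e[OF h(2)] e[OF h(3)]
    by (cases "s i < s j") (auto simp: sa_val root_matrix_def min_def max_def)
qed

lemma sc_val: "struct_const C (i,j,k) = - C i j k"
  unfolding struct_const_def dcoef_def by simp

lemma ct_val: "c_tilde s C (i,j,k) = - C (s i) (s j) (s k)"
  unfolding c_tilde_def struct_const_def dcoef_def using C_anti[of "s j" "s i" "s k"] by simp

lemma sc_sa: "\<bar>struct_const C (sigma_act s (i,j,k))\<bar> = \<bar>C (s i) (s j) (s k)\<bar>"
  using C_anti[of "s j" "s i" "s k"] by (cases "s i < s j") (auto simp: sa_val sc_val min_def max_def)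

lemma rm_sum_real: "i < n \<Longrightarrow> j < n \<Longrightarrow> k < n \<Longrightarrow>
   (\<Sum>l<n. of_int (root_matrix (i,j,k) l) * y l) = y k - y i - (y j :: real)"
proof -
  assume r: "i < n" "j < n" "k < n"
  have "(\<Sum>l<n. of_int (root_matrix (i,j,k) l) * y l) =
      (\<Sum>l<n. (if l = k then y l else 0)) - (\<Sum>l<n. (if l = i then y l else 0)) - (\<Sum>l<n. (if l = j then y l else 0))"
  proof -
    have pt: "of_int (root_matrix (i,j,k) l) * y l = (if l = k then y l else 0) - (if l = i then y l else 0) - (if l = j then y l else 0)" for l
      by (simp add: root_matrix_def algebra_simps)
    show ?thesis unfolding pt by (simp add: sum_subtractf)
  qed
  then show ?thesis using r by simp
qed

lemma rm_sum_int: "i < n \<Longrightarrow> j < n \<Longrightarrow> k < n \<Longrightarrow>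
   (\<Sum>l<n. root_matrix (i,j,k) l * y l) = y k - y i - (y j :: int)"
proof -
  assume r: "i < n" "j < n" "k < n"
  have "(\<Sum>l<n. root_matrix (i,j,k) l * y l) =
      (\<Sum>l<n. (if l = k then y l else 0)) - (\<Sum>l<n. (if l = i then y l else 0)) - (\<Sum>l<n. (if l = j then y l else 0))"
  proof -
    have pt: "root_matrix (i,j,k) l * y l = (if l = k then y l else 0) - (if l = i then y l else 0) - (if l = j then y l else 0)" for l
      by (simp add: root_matrix_def algebra_simps)
    show ?thesis unfolding pt by (simp add: sum_subtractf)
  qed
  then show ?thesis using r by simp
qed

end


lemma par: "((((a + b) mod 2 + c) mod 2 + (d + e) mod 2) mod 2 + a + b) mod 2 = (c - d - e) mod (2::int)"
proof -
  have e: "(((a + b) + c) + (d + e)) + (a + b) = (c - d - e) + (a + b + d + e) * 2" by (simp add: algebra_simps)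
  have "((((a + b) mod 2 + c) mod 2 + (d + e) mod 2) mod 2 + a + b) mod 2 = ((((a + b) + c) mod 2 + (d + e) mod 2) mod 2 + a + b) mod 2"
    by (simp only: mod_add_left_eq)
  also have "\<dots> = ((((a + b) + c) + (d + e)) mod 2 + a + b) mod 2"
    by (simp only: mod_add_left_eq mod_add_right_eq)
  also have "\<dots> = ((((a + b) + c) + (d + e)) mod 2 + (a + b)) mod 2"
    by (simp only: add.assoc)
  also have "\<dots> = ((((a + b) + c) + (d + e)) + (a + b)) mod 2"
    by (simp only: mod_add_left_eq)
  also have "\<dots> = ((c - d - e) + (a + b + d + e) * 2) mod 2" by (simp only: e)
  also have "\<dots> = (c - d - e) mod 2" by (rule mod_mult_self1)
  finally show ?thesis .
qed

context metric begin

lemma Yt_val: "Yt (i,j,k) = C i j k * C (s i) (s j) (s k) * g k / (g i * g j)"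
  unfolding Yt_def Y_def by simp

lemma Yt_sa: "t \<in> A \<Longrightarrow> Yt (sigma_act s t) = Yt t"
proof -
  assume "t \<in> A"
  then obtain i j k where t: "t = (i,j,k)" and h: "i < j" "j < n" "k < n" "C i j k \<noteq> 0"
    by (cases t) (auto simp: arr_mem)
  have i: "i < n" using h by simp
  have "Yt (sigma_act s t) = Y (s i) (s j) (s k)"
    using t Y_sym[of "s i" "s j" "s k"] by (cases "s i < s j") (auto simp: sa_val Yt_def min_def max_def)
  also have "\<dots> = Yt t" using t Y_s[OF i h(2) h(3)] by (simp add: Yt_def)
  finally show ?thesis .
qed

lemma Yt_nz: "t \<in> A \<Longrightarrow> Yt t \<noteq> 0"
proof -
  assume "t \<in> A"
  then obtain i j k where t: "t = (i,j,k)" and h: "i < j" "j < n" "k < n" "C i j k \<noteq> 0"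
    by (cases t) (auto simp: arr_mem)
  have i: "i < n" using h by simp
  show ?thesis using t h C_s'[OF h(4)] g_nz[OF i] g_nz[OF h(2)] g_nz[OF h(3)] by (simp add: Yt_val)
qed

lemma sc_nz: "t \<in> A \<Longrightarrow> struct_const C t \<noteq> 0"
  by (cases t) (auto simp: arr_mem sc_val)

lemma ln_Yt: "t \<in> A \<Longrightarrow> ln \<bar>Yt t\<bar> = ln \<bar>struct_const C t\<bar> + ln \<bar>struct_const C (sigma_act s t)\<bar>
     + (\<Sum>l<n. of_int (root_matrix t l) * ln \<bar>g l\<bar>)"
proof -
  assume "t \<in> A"
  then obtain i j k where t: "t = (i,j,k)" and h: "i < j" "j < n" "k < n" "C i j k \<noteq> 0"
    by (cases t) (auto simp: arr_mem)
  have i: "i < n" using h by simp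
  have c2: "C (s i) (s j) (s k) \<noteq> 0" using C_s'[OF h(4)] .
  have gi: "g i \<noteq> 0" "g j \<noteq> 0" "g k \<noteq> 0" using g_nz i h by auto
  have "\<bar>Yt t\<bar> = \<bar>C i j k\<bar> * \<bar>C (s i) (s j) (s k)\<bar> * \<bar>g k\<bar> / (\<bar>g i\<bar> * \<bar>g j\<bar>)"
    using t by (simp add: Yt_val abs_mult abs_divide)
  then have "ln \<bar>Yt t\<bar> = ln \<bar>C i j k\<bar> + ln \<bar>C (s i) (s j) (s k)\<bar> + ln \<bar>g k\<bar> - ln \<bar>g i\<bar> - ln \<bar>g j\<bar>"
    using h(4) c2 gi by (simp add: ln_mult ln_div)
  then show ?thesis
    using t sc_sa[of i j k] rm_sum_real[OF i h(2) h(3), of "\<lambda>l. ln \<bar>g l\<bar>"] by (simp add: sc_val)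
qed

lemma L_Yt: "t \<in> A \<Longrightarrow> (logsign (Yt t) + logsign (struct_const C t) + logsign (c_tilde s C t)) mod 2
    = root_matrix2_mult n (\<lambda>l. logsign (g l)) t"
proof -
  assume "t \<in> A"
  then obtain i j k where t: "t = (i,j,k)" and h: "i < j" "j < n" "k < n" "C i j k \<noteq> 0"
    by (cases t) (auto simp: arr_mem)
  have i: "i < n" using h by simp
  have c2: "C (s i) (s j) (s k) \<noteq> 0" using C_s'[OF h(4)] .
  have gi: "g i \<noteq> 0" "g j \<noteq> 0" "g k \<noteq> 0" using g_nz i h by auto
  define x where "x = struct_const C t"
  define y where "y = c_tilde s C t"
  have xy: "x \<noteq> 0" "y \<noteq> 0" using t h(4) c2 by (auto simp: x_def y_def sc_val ct_val)
  have "Yt t = (x * y * g k) / (g i * g j)"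
    using t by (simp add: x_def y_def sc_val ct_val Yt_val)
  then have F1: "logsign (Yt t) = (((logsign x + logsign y) mod 2 + logsign (g k)) mod 2 + (logsign (g i) + logsign (g j)) mod 2) mod 2"
    using xy gi by (simp add: ls_div ls_mult)
  have F2: "root_matrix2_mult n (\<lambda>l. logsign (g l)) t = (logsign (g k) - logsign (g i) - logsign (g j)) mod 2"
    unfolding root_matrix2_mult_def using t rm_sum_int[OF i h(2) h(3)] by simp
  show ?thesis unfolding x_def[symmetric] y_def[symmetric] F1 F2 by (rule par)
qed

lemma P_Yt:
  assumes a: "a \<in> inv_kernel n C s"
  shows "(\<Sum>t\<in>A. a t * ln \<bar>Yt t\<bar>) = (\<Sum>t\<in>A. 2 * a t * ln \<bar>struct_const C t\<bar>)"
proof -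
  have ker: "\<And>l. l < n \<Longrightarrow> (\<Sum>t\<in>A. of_int (root_matrix t l) * a t) = 0"
    and ainv: "\<And>t. t \<in> A \<Longrightarrow> a (sigma_act s t) = a t"
    using a unfolding inv_kernel_def by auto
  define L where "L = (\<lambda>l. ln \<bar>g l\<bar>)"
  have "(\<Sum>t\<in>A. a t * ln \<bar>Yt t\<bar>) = (\<Sum>t\<in>A. a t * ln \<bar>struct_const C t\<bar> + a t * ln \<bar>struct_const C (sigma_act s t)\<bar>
     + a t * (\<Sum>l<n. of_int (root_matrix t l) * L l))"
    by (intro sum.cong refl) (simp add: ln_Yt L_def algebra_simps)
  also have "\<dots> = (\<Sum>t\<in>A. a t * ln \<bar>struct_const C t\<bar>) + (\<Sum>t\<in>A. a t * ln \<bar>struct_const C (sigma_act s t)\<bar>)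
     + (\<Sum>t\<in>A. a t * (\<Sum>l<n. of_int (root_matrix t l) * L l))"
    by (simp add: sum.distrib)
  also have "(\<Sum>t\<in>A. a t * ln \<bar>struct_const C (sigma_act s t)\<bar>) = (\<Sum>t\<in>A. a (sigma_act s t) * ln \<bar>struct_const C (sigma_act s t)\<bar>)"
    by (intro sum.cong refl) (simp add: ainv)
  also have "\<dots> = (\<Sum>t\<in>A. a t * ln \<bar>struct_const C t\<bar>)"
    by (rule sum_sa[of "\<lambda>t. a t * ln \<bar>struct_const C t\<bar>"])
  also have "(\<Sum>t\<in>A. a t * (\<Sum>l<n. of_int (root_matrix t l) * L l)) = (\<Sum>l<n. L l * (\<Sum>t\<in>A. of_int (root_matrix t l) * a t))"
    by (simp add: sum_distrib_left sum.swap[of _ A] mult_ac)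
  also have "\<dots> = 0" using ker by simp
  finally show ?thesis by (simp add: sum.distrib[symmetric] algebra_simps)
qed

end

lemma bit_cancel: "(a = 0 \<or> a = 1) \<Longrightarrow> (b = 0 \<or> b = 1) \<Longrightarrow> (a + c) mod 2 = (b + c) mod (2::int) \<Longrightarrow> a = b"
  by presburger

theorem theorem2p6:
  fixes n :: nat and C :: "nat \<Rightarrow> nat \<Rightarrow> nat \<Rightarrow> real" and \<sigma> :: "nat \<Rightarrow> nat"
    and k :: real and \<delta> :: "nat \<Rightarrow> int"
    and r :: nat and \<alpha> :: "nat \<Rightarrow> nat \<times> nat \<times> nat \<Rightarrow> real"
  assumes "nice_lie_algebra n C"
    and "nilpotent_lie n C"
    and "diagram_involution n C \<sigma>"
    and "\<forall>i<n. \<delta> i \<in> {0, 1}"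
    and "\<forall>i<n. \<delta> (\<sigma> i) = \<delta> i"
    and "is_basis_of r \<alpha> (inv_kernel n C \<sigma>)"
  shows "(\<exists>g. sigma_diagonal n \<sigma> g \<and> (\<forall>i<n. logsign (g i) = \<delta> i) \<and>
            (\<forall>i<n. \<forall>j<n. ricci_operator n C (sdiag_metric \<sigma> g) i j
                           = (if i = j then k / 2 else 0)))
     \<longleftrightarrow>
         (\<exists>X :: nat \<times> nat \<times> nat \<Rightarrow> real.
            (\<forall>t\<in>arrows n C. X (sigma_act \<sigma> t) = X t) \<and>
            (\<forall>l<n. (\<Sum>t\<in>arrows n C. of_int (root_matrix t l) * X t) = k) \<and>
            (\<forall>t\<in>arrows n C. X t \<noteq> 0) \<and>
            (\<forall>t\<in>arrows n C.
               (logsign (X t) + logsign (struct_const C t) + logsign (c_tilde \<sigma> C t)) mod 2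
                 = root_matrix2_mult n \<delta> t) \<and>
            (\<forall>i<r. abs_pow (arrows n C) X (\<alpha> i)
                     = abs_pow (arrows n C) (struct_const C) (\<lambda>t. 2 * \<alpha> i t)))"
proof -
  interpret base n C \<sigma> using assms(1-3) by (unfold_locales)
  have basis: "\<And>i. i < r \<Longrightarrow> \<alpha> i \<in> inv_kernel n C \<sigma>"
    and span: "\<And>a. a \<in> inv_kernel n C \<sigma> \<Longrightarrow> \<exists>w. a = (\<lambda>t. \<Sum>i<r. w i * \<alpha> i t)"
    using assms(6) unfolding is_basis_of_def by blast+
  show ?thesis
  proof
    assume "\<exists>g. sigma_diagonal n \<sigma> g \<and> (\<forall>i<n. logsign (g i) = \<delta> i) \<and>
            (\<forall>i<n. \<forall>j<n. ricci_operator n C (sdiag_metric \<sigma> g) i j = (if i = j then k / 2 else 0))"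
    then obtain g where gd: "sigma_diagonal n \<sigma> g" and lg: "\<forall>i<n. logsign (g i) = \<delta> i"
      and ric: "\<forall>i<n. \<forall>j<n. ricci_operator n C (sdiag_metric \<sigma> g) i j = (if i = j then k / 2 else 0)"
      by blast
    interpret metric n C \<sigma> g using gd by unfold_locales
    have Dk: "Dv l = k / 2" if l: "l < n" for l
      using ric[rule_format, OF l l] l unfolding ricop by simp
    have rm2: "root_matrix2_mult n (\<lambda>l. logsign (g l)) t = root_matrix2_mult n \<delta> t" for t
      unfolding root_matrix2_mult_def using lg by (intro arg_cong[where f="\<lambda>x. x mod 2"] sum.cong refl) auto
    show "\<exists>X :: nat \<times> nat \<times> nat \<Rightarrow> real.
            (\<forall>t\<in>arrows n C. X (sigma_act \<sigma> t) = X t) \<and>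
            (\<forall>l<n. (\<Sum>t\<in>arrows n C. of_int (root_matrix t l) * X t) = k) \<and>
            (\<forall>t\<in>arrows n C. X t \<noteq> 0) \<and>
            (\<forall>t\<in>arrows n C.
               (logsign (X t) + logsign (struct_const C t) + logsign (c_tilde \<sigma> C t)) mod 2
                 = root_matrix2_mult n \<delta> t) \<and>
            (\<forall>i<r. abs_pow (arrows n C) X (\<alpha> i)
                     = abs_pow (arrows n C) (struct_const C) (\<lambda>t. 2 * \<alpha> i t))"
    proof (intro exI[of _ Yt] conjI ballI allI impI)
      fix t assume "t \<in> arrows n C"
      then show "Yt (sigma_act \<sigma> t) = Yt t" by (rule Yt_sa)
    next
      fix l assume "l < n"
      then show "(\<Sum>t\<in>arrows n C. of_int (root_matrix t l) * Yt t) = k"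
        using arrows_Dv Dk by simp
    next
      fix t assume "t \<in> arrows n C"
      then show "Yt t \<noteq> 0" by (rule Yt_nz)
    next
      fix t assume t: "t \<in> arrows n C"
      show "(logsign (Yt t) + logsign (struct_const C t) + logsign (c_tilde \<sigma> C t)) mod 2 = root_matrix2_mult n \<delta> t"
        using L_Yt[OF t] rm2[of t] by simp
    next
      fix i assume i: "i < r"
      have "abs_pow (arrows n C) Yt (\<alpha> i) = exp (\<Sum>t\<in>arrows n C. \<alpha> i t * ln \<bar>Yt t\<bar>)"
        by (rule abs_pow_exp) (use finite_arrows Yt_nz in auto)
      also have "\<dots> = exp (\<Sum>t\<in>arrows n C. 2 * \<alpha> i t * ln \<bar>struct_const C t\<bar>)"
        using P_Yt[OF basis[OF i]] by simp
      also have "\<dots> = abs_pow (arrows n C) (struct_const C) (\<lambda>t. 2 * \<alpha> i t)"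
        by (rule abs_pow_exp[symmetric]) (use finite_arrows sc_nz in auto)
      finally show "abs_pow (arrows n C) Yt (\<alpha> i) = abs_pow (arrows n C) (struct_const C) (\<lambda>t. 2 * \<alpha> i t)" .
    qed
  next
    assume "\<exists>X :: nat \<times> nat \<times> nat \<Rightarrow> real.
            (\<forall>t\<in>arrows n C. X (sigma_act \<sigma> t) = X t) \<and>
            (\<forall>l<n. (\<Sum>t\<in>arrows n C. of_int (root_matrix t l) * X t) = k) \<and>
            (\<forall>t\<in>arrows n C. X t \<noteq> 0) \<and>
            (\<forall>t\<in>arrows n C.
               (logsign (X t) + logsign (struct_const C t) + logsign (c_tilde \<sigma> C t)) mod 2
                 = root_matrix2_mult n \<delta> t) \<and>
            (\<forall>i<r. abs_pow (arrows n C) X (\<alpha> i)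
                     = abs_pow (arrows n C) (struct_const C) (\<lambda>t. 2 * \<alpha> i t))"
    then obtain X :: "nat \<times> nat \<times> nat \<Rightarrow> real" where
      XI: "\<And>t. t \<in> arrows n C \<Longrightarrow> X (sigma_act \<sigma> t) = X t" and
      XK: "\<And>l. l < n \<Longrightarrow> (\<Sum>t\<in>arrows n C. of_int (root_matrix t l) * X t) = k" and
      XH: "\<And>t. t \<in> arrows n C \<Longrightarrow> X t \<noteq> 0" and
      XL: "\<And>t. t \<in> arrows n C \<Longrightarrow> (logsign (X t) + logsign (struct_const C t) + logsign (c_tilde \<sigma> C t)) mod 2
                 = root_matrix2_mult n \<delta> t" and
      XP: "\<And>i. i < r \<Longrightarrow> abs_pow (arrows n C) X (\<alpha> i) = abs_pow (arrows n C) (struct_const C) (\<lambda>t. 2 * \<alpha> i t)"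
      by blast
    have scnz: "\<And>t. t \<in> arrows n C \<Longrightarrow> struct_const C t \<noteq> 0"
      by (case_tac t) (auto simp: arr_mem sc_val)
    define v where "v = (\<lambda>t. ln \<bar>X t\<bar> - ln \<bar>struct_const C t\<bar> - ln \<bar>struct_const C (sigma_act \<sigma> t)\<bar>)"
    have v_inv: "\<And>t. t \<in> arrows n C \<Longrightarrow> v (sigma_act \<sigma> t) = v t"
      unfolding v_def using XI sa_sa by simp
    have av: "\<And>i. i < r \<Longrightarrow> (\<Sum>t\<in>arrows n C. \<alpha> i t * v t) = 0"
    proof -
      fix i assume i: "i < r"
      have ainv: "\<And>t. t \<in> arrows n C \<Longrightarrow> \<alpha> i (sigma_act \<sigma> t) = \<alpha> i t"
        using basis[OF i] unfolding inv_kernel_def by blast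
      have "exp (\<Sum>t\<in>arrows n C. \<alpha> i t * ln \<bar>X t\<bar>) = exp (\<Sum>t\<in>arrows n C. 2 * \<alpha> i t * ln \<bar>struct_const C t\<bar>)"
        using XP[OF i] abs_pow_exp[OF finite_arrows, of X "\<alpha> i"] abs_pow_exp[OF finite_arrows, of "struct_const C" "\<lambda>t. 2 * \<alpha> i t"]
          XH scnz by simp
      then have e1: "(\<Sum>t\<in>arrows n C. \<alpha> i t * ln \<bar>X t\<bar>) = (\<Sum>t\<in>arrows n C. 2 * \<alpha> i t * ln \<bar>struct_const C t\<bar>)"
        by simp
      have e2: "(\<Sum>t\<in>arrows n C. \<alpha> i t * ln \<bar>struct_const C (sigma_act \<sigma> t)\<bar>) = (\<Sum>t\<in>arrows n C. \<alpha> i t * ln \<bar>struct_const C t\<bar>)"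
      proof -
        have "(\<Sum>t\<in>arrows n C. \<alpha> i t * ln \<bar>struct_const C (sigma_act \<sigma> t)\<bar>)
            = (\<Sum>t\<in>arrows n C. \<alpha> i (sigma_act \<sigma> t) * ln \<bar>struct_const C (sigma_act \<sigma> t)\<bar>)"
          by (intro sum.cong refl) (simp add: ainv)
        also have "\<dots> = (\<Sum>t\<in>arrows n C. \<alpha> i t * ln \<bar>struct_const C t\<bar>)"
          by (rule sum_sa[of "\<lambda>t. \<alpha> i t * ln \<bar>struct_const C t\<bar>"])
        finally show ?thesis .
      qed
      have "(\<Sum>t\<in>arrows n C. \<alpha> i t * v t) = (\<Sum>t\<in>arrows n C. \<alpha> i t * ln \<bar>X t\<bar>)
          - (\<Sum>t\<in>arrows n C. \<alpha> i t * ln \<bar>struct_const C t\<bar>) - (\<Sum>t\<in>arrows n C. \<alpha> i t * ln \<bar>struct_const C (sigma_act \<sigma> t)\<bar>)"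
        unfolding v_def by (simp add: algebra_simps sum_subtractf sum.distrib)
      also have "\<dots> = 0" unfolding e1 e2 by (simp add: sum_distrib_left[symmetric] mult.assoc)
      finally show "(\<Sum>t\<in>arrows n C. \<alpha> i t * v t) = 0" .
    qed
    have orth: "\<And>a. (\<forall>l\<in>{..<n}. (\<Sum>t\<in>arrows n C. of_int (root_matrix t l) * a t) = 0) \<Longrightarrow>
        (\<Sum>t\<in>arrows n C. a t * v t) = 0"
    proof -
      fix a :: "nat \<times> nat \<times> nat \<Rightarrow> real"
      assume ker: "\<forall>l\<in>{..<n}. (\<Sum>t\<in>arrows n C. of_int (root_matrix t l) * a t) = 0"
      define a0 where "a0 = (\<lambda>t. if t \<in> arrows n C then (a t + a (sigma_act \<sigma> t)) / 2 else 0)"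
      have ks: "(\<Sum>t\<in>arrows n C. of_int (root_matrix t l) * a (sigma_act \<sigma> t)) = 0" if l: "l < n" for l
      proof -
        have "(\<Sum>t\<in>arrows n C. of_int (root_matrix t l) * a (sigma_act \<sigma> t))
            = (\<Sum>t\<in>arrows n C. of_int (root_matrix (sigma_act \<sigma> (sigma_act \<sigma> t)) l) * a (sigma_act \<sigma> t))"
          by (intro sum.cong refl) (simp add: sa_sa)
        also have "\<dots> = (\<Sum>t\<in>arrows n C. of_int (root_matrix (sigma_act \<sigma> t) l) * a t)"
          by (rule sum_sa[of "\<lambda>t. of_int (root_matrix (sigma_act \<sigma> t) l) * a t"])
        also have "\<dots> = (\<Sum>t\<in>arrows n C. of_int (root_matrix t (\<sigma> l)) * a t)"
          by (intro sum.cong refl) (simp add: rm_sa l)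
        also have "\<dots> = 0" using ker s_lt[OF l] by simp
        finally show ?thesis .
      qed
      have "a0 \<in> inv_kernel n C \<sigma>"
        unfolding inv_kernel_def
      proof (intro CollectI conjI allI impI ballI)
        fix t assume "t \<notin> arrows n C" then show "a0 t = 0" by (simp add: a0_def)
      next
        fix l assume l: "l < n"
        have "(\<Sum>t\<in>arrows n C. of_int (root_matrix t l) * a0 t)
            = ((\<Sum>t\<in>arrows n C. of_int (root_matrix t l) * a t) + (\<Sum>t\<in>arrows n C. of_int (root_matrix t l) * a (sigma_act \<sigma> t))) / 2"
          unfolding a0_def by (simp add: sum.distrib[symmetric] sum_divide_distrib algebra_simps cong: sum.cong)
        then show "(\<Sum>t\<in>arrows n C. of_int (root_matrix t l) * a0 t) = 0"
          using ks[OF l] ker l by simp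
      next
        fix t assume t: "t \<in> arrows n C"
        show "a0 (sigma_act \<sigma> t) = a0 t"
          unfolding a0_def using t sa_arr sa_sa by simp
      qed
      then obtain w where w: "a0 = (\<lambda>t. \<Sum>i<r. w i * \<alpha> i t)" using span by blast
      have "(\<Sum>t\<in>arrows n C. a0 t * v t) = (\<Sum>i<r. w i * (\<Sum>t\<in>arrows n C. \<alpha> i t * v t))"
        unfolding w by (simp add: sum_distrib_left sum_distrib_right sum.swap[of _ "arrows n C"] mult_ac)
      also have "\<dots> = 0" using av by simp
      finally have z: "(\<Sum>t\<in>arrows n C. a0 t * v t) = 0" .
      have sw: "(\<Sum>t\<in>arrows n C. a (sigma_act \<sigma> t) * v t) = (\<Sum>t\<in>arrows n C. a t * v t)"
      proof -
        have "(\<Sum>t\<in>arrows n C. a (sigma_act \<sigma> t) * v t) = (\<Sum>t\<in>arrows n C. a (sigma_act \<sigma> t) * v (sigma_act \<sigma> t))"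
          by (intro sum.cong refl) (simp add: v_inv)
        also have "\<dots> = (\<Sum>t\<in>arrows n C. a t * v t)" by (rule sum_sa[of "\<lambda>t. a t * v t"])
        finally show ?thesis .
      qed
      have "(\<Sum>t\<in>arrows n C. a0 t * v t) = ((\<Sum>t\<in>arrows n C. a t * v t) + (\<Sum>t\<in>arrows n C. a (sigma_act \<sigma> t) * v t)) / 2"
        unfolding a0_def by (simp add: sum.distrib[symmetric] sum_divide_distrib algebra_simps cong: sum.cong)
      then show "(\<Sum>t\<in>arrows n C. a t * v t) = 0" using z sw by simp
    qed
    obtain y where y: "\<And>t. t \<in> arrows n C \<Longrightarrow> v t = (\<Sum>l\<in>{..<n}. of_int (root_matrix t l) * y l)"
      using fredholm[OF finite_arrows, of "{..<n}" v "\<lambda>t l. of_int (root_matrix t l)"] orth by auto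
    define y' where "y' = (\<lambda>l. (y l + y (\<sigma> l)) / 2)"
    have vy': "v t = (\<Sum>l<n. of_int (root_matrix t l) * y' l)" if t: "t \<in> arrows n C" for t
    proof -
      have "(\<Sum>l<n. of_int (root_matrix t l) * y (\<sigma> l)) = (\<Sum>l<n. of_int (root_matrix t (\<sigma> (\<sigma> l))) * y (\<sigma> l))"
        by (intro sum.cong refl) (simp add: s_s)
      also have "\<dots> = (\<Sum>l<n. of_int (root_matrix t (\<sigma> l)) * y l)"
        by (rule sum_s[of "\<lambda>l. of_int (root_matrix t (\<sigma> l)) * y l"])
      also have "\<dots> = (\<Sum>l<n. of_int (root_matrix (sigma_act \<sigma> t) l) * y l)"
        by (intro sum.cong refl) (simp add: rm_sa t)
      also have "\<dots> = v (sigma_act \<sigma> t)" using y[OF sa_arr[OF t]] by simp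
      also have "\<dots> = v t" by (rule v_inv[OF t])
      finally have e: "(\<Sum>l<n. of_int (root_matrix t l) * y (\<sigma> l)) = v t" .
      have "(\<Sum>l<n. of_int (root_matrix t l) * y' l) = ((\<Sum>l<n. of_int (root_matrix t l) * y l) + (\<Sum>l<n. of_int (root_matrix t l) * y (\<sigma> l))) / 2"
        unfolding y'_def by (simp add: sum.distrib[symmetric] sum_divide_distrib algebra_simps)
      then show ?thesis using e y[OF t] by simp
    qed
    define g where "g = (\<lambda>l. (if \<delta> l = 1 then -1 else 1) * exp (y' l))"
    have gd: "sigma_diagonal n \<sigma> g"
      unfolding sigma_diagonal_def
    proof (intro allI impI conjI)
      fix i assume i: "i < n"
      show "g i \<noteq> 0" by (simp add: g_def)
      have "y' (\<sigma> i) = y' i" unfolding y'_def using s_s[OF i] by simp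
      then show "g (\<sigma> i) = g i" unfolding g_def using assms(5) i by simp
    qed
    have lg: "\<forall>i<n. logsign (g i) = \<delta> i"
    proof (intro allI impI)
      fix i assume i: "i < n"
      then have "\<delta> i = 0 \<or> \<delta> i = 1" using assms(4) by simp
      then show "logsign (g i) = \<delta> i" by (auto simp: g_def logsign_def)
    qed
    interpret metric n C \<sigma> g using gd by unfold_locales
    have lng: "\<And>l. ln \<bar>g l\<bar> = y' l" by (simp add: g_def abs_mult)
    have YX: "Yt t = X t" if t: "t \<in> arrows n C" for t
    proof -
      have "ln \<bar>Yt t\<bar> = ln \<bar>X t\<bar>"
        using ln_Yt[OF t] vy'[OF t] unfolding lng v_def by simp
      then have ab: "\<bar>Yt t\<bar> = \<bar>X t\<bar>" using Yt_nz[OF t] XH[OF t] by simp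
      have rm2: "root_matrix2_mult n (\<lambda>l. logsign (g l)) t = root_matrix2_mult n \<delta> t"
        unfolding root_matrix2_mult_def using lg by (intro arg_cong[where f="\<lambda>x. x mod 2"] sum.cong refl) auto
      have "(logsign (Yt t) + (logsign (struct_const C t) + logsign (c_tilde \<sigma> C t))) mod 2
          = (logsign (X t) + (logsign (struct_const C t) + logsign (c_tilde \<sigma> C t))) mod 2"
        using L_Yt[OF t] XL[OF t] rm2 by (simp add: add.assoc)
      then have "logsign (Yt t) = logsign (X t)"
        using bit_cancel ls_range by blast
      then show ?thesis using ls_eq Yt_nz[OF t] XH[OF t] ab by blast
    qed
    have Dk: "Dv l = k / 2" if l: "l < n" for l
    proof -
      have "2 * Dv l = (\<Sum>t\<in>arrows n C. of_int (root_matrix t l) * Yt t)" using arrows_Dv[OF l] by simp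
      also have "\<dots> = (\<Sum>t\<in>arrows n C. of_int (root_matrix t l) * X t)"
        by (intro sum.cong refl) (simp add: YX)
      also have "\<dots> = k" by (rule XK[OF l])
      finally show ?thesis by simp
    qed
    show "\<exists>g. sigma_diagonal n \<sigma> g \<and> (\<forall>i<n. logsign (g i) = \<delta> i) \<and>
            (\<forall>i<n. \<forall>j<n. ricci_operator n C (sdiag_metric \<sigma> g) i j = (if i = j then k / 2 else 0))"
      using gd lg ricop Dk by (intro exI[of _ g]) auto
  qed
qed


end
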